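(* Let $1<p<\infty$, $n\ge1$, and let $f\in C([0,\infty))$, $g\in C^{0,1}([0,\infty))$ be strictly increasing with $f(0)=g(0)=0$; let $F(s)=\int_0^s f(t)\,dt$. Suppose that $$\int_1^\infty\frac{ds}{F(s)^{1/p}}<+\infty\qquad\text{or}\qquad\int_1^\infty\frac{s^{p-2}\,ds}{g(s)}<+\infty.$$ Let $v$ be any solution of $$\big(r^{n-1}(v')^{p-1}\big)'=r^{n-1}\big(f(v)+g(v')\big),\qquad v(0)=v_0>0,\quad v'(0)=0.$$ Then: (i) $v$ exists on a maximal interval $(0,R)$ with $0<R<\infty$, and $v'(r)\to\infty$ as $r\to R$; (ii) moreover, $v(r)\to\infty$ as $r\to R$ if and only if $\displaystyle\int_1^\infty\frac{s^{p-1}}{g(s)}\,ds=\infty$. *)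

theory Defs
  imports "HOL-Analysis.Analysis"
begin

definition ivl0 :: "ereal \<Rightarrow> real set" where
  "ivl0 R = {r. 0 \<le> r \<and> ereal r < R}"

definition prim :: "(real \<Rightarrow> real) \<Rightarrow> real \<Rightarrow> real" where
  "prim f s = integral {0..s} f"

text \<open>(v, v') is a C^1 solution on [0,R) of
  (r^(n-1) (v')^(p-1))' = r^(n-1) (f(v) + g(v')), v(0)=v0, v'(0)=0.
  Since f and g are only given on [0,oo), we require v' \<ge> 0 (hence v \<ge> v0 > 0).\<close>
definition is_sol ::
  "real \<Rightarrow> nat \<Rightarrow> (real \<Rightarrow> real) \<Rightarrow> (real \<Rightarrow> real) \<Rightarrow> real \<Rightarrow> ereal
     \<Rightarrow> (real \<Rightarrow> real) \<Rightarrow> (real \<Rightarrow> real) \<Rightarrow> bool" where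
  "is_sol p n f g v0 R v v' \<longleftrightarrow>
     0 < R \<and>
     (\<forall>r\<in>ivl0 R. (v has_real_derivative v' r) (at r within ivl0 R)) \<and>
     continuous_on (ivl0 R) v' \<and>
     v 0 = v0 \<and> v' 0 = 0 \<and>
     (\<forall>r\<in>ivl0 R. 0 \<le> v' r) \<and>
     (\<forall>r\<in>ivl0 R. 0 < r \<longrightarrow>
        ((\<lambda>s. s ^ (n - 1) * (v' s) powr (p - 1)) has_real_derivative
           r ^ (n - 1) * (f (v r) + g (v' r))) (at r))"

definition is_max_sol ::
  "real \<Rightarrow> nat \<Rightarrow> (real \<Rightarrow> real) \<Rightarrow> (real \<Rightarrow> real) \<Rightarrow> real \<Rightarrow> ereal
     \<Rightarrow> (real \<Rightarrow> real) \<Rightarrow> (real \<Rightarrow> real) \<Rightarrow> bool" where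
  "is_max_sol p n f g v0 R v v' \<longleftrightarrow>
     is_sol p n f g v0 R v v' \<and>
     \<not> (\<exists>R' w w'. R < R' \<and> is_sol p n f g v0 R' w w' \<and> (\<forall>r\<in>ivl0 R. w r = v r))"

end

theory Submission
  imports Defs
begin

lemma open_ereal_lt: "open {s::real. ereal s < R}"
proof (cases R)
  case (real r) then show ?thesis by (simp add: open_Collect_less continuous_on_id)
next
  case PInf then show ?thesis by simp
next
  case MInf then show ?thesis by simp
qed

locale ctx =
  fixes p v0 :: real and n :: nat and f g v v' :: "real \<Rightarrow> real" and R :: ereal
  assumes p: "1 < p" and n: "n \<ge> 1"
    and f_cont: "continuous_on {0..} f" and f_mono: "strict_mono_on {0..} f" and f0: "f 0 = 0"
    and g_lip: "\<forall>T\<ge>0. \<exists>L. L-lipschitz_on {0..T} g"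
    and g_mono: "strict_mono_on {0..} g" and g0: "g 0 = 0"
    and v0: "v0 > 0"
    and sol: "is_sol p n f g v0 R v v'"
begin

abbreviation "I \<equiv> ivl0 R"

definition Phi where "Phi s = s^(n-1) * v' s powr (p-1)"
definition psi where "psi s = v' s powr (p-1)"
definition h where "h s = f (v s) + g (v' s)"

lemma g_cont_T: "T \<ge> 0 \<Longrightarrow> continuous_on {0..T} g"
  using g_lip lipschitz_on_continuous_on by blast

lemma g_cont: "continuous_on {0..} g"
proof -
  have "continuous (at x within {0..}) g" if x: "x \<ge> 0" for x
  proof -
    have "continuous (at x within {0..x+1}) g"
      using g_cont_T[of "x+1"] x by (simp add: continuous_on_eq_continuous_within)
    moreover have "at x within {0..} = at x within {0..x+1}"
      by (rule at_within_nhd[of _ "{..<x+1}"]) (use x in auto)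
    ultimately show ?thesis by simp
  qed
  then show ?thesis by (simp add: continuous_on_eq_continuous_within)
qed

lemma f_le: "0 \<le> x \<Longrightarrow> x \<le> y \<Longrightarrow> f x \<le> f y"
  using f_mono by (metis atLeast_iff order.order_iff_strict order_trans strict_mono_onD)
lemma f_less: "0 \<le> x \<Longrightarrow> x < y \<Longrightarrow> f x < f y"
  using f_mono by (simp add: strict_mono_onD)
lemma g_le: "0 \<le> x \<Longrightarrow> x \<le> y \<Longrightarrow> g x \<le> g y"
  using g_mono by (metis atLeast_iff order.order_iff_strict order_trans strict_mono_onD)
lemma g_less: "0 \<le> x \<Longrightarrow> x < y \<Longrightarrow> g x < g y"
  using g_mono by (simp add: strict_mono_onD)
lemma f_pos: "0 < x \<Longrightarrow> 0 < f x" using f_less[of 0 x] f0 by simp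
lemma g_nonneg: "0 \<le> x \<Longrightarrow> 0 \<le> g x" using g_le[of 0 x] g0 by simp
lemma g_pos: "0 < x \<Longrightarrow> 0 < g x" using g_less[of 0 x] g0 by simp

lemma R_pos: "0 < R" using sol by (simp add: is_sol_def)
lemma memI: "r \<in> I \<longleftrightarrow> 0 \<le> r \<and> ereal r < R" by (simp add: ivl0_def)
lemma zero_I: "0 \<in> I" using R_pos by (simp add: memI zero_ereal_def)
lemma memI_le: "r \<in> I \<Longrightarrow> 0 \<le> s \<Longrightarrow> s \<le> r \<Longrightarrow> s \<in> I"
  by (auto simp: memI) (meson ereal_less_eq(3) le_less_trans)
lemma interval_I: "r \<in> I \<Longrightarrow> 0 \<le> s \<Longrightarrow> {s..r} \<subseteq> I"
  using memI_le by auto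

lemma at_I: assumes "r \<in> I" "0 < r" shows "at r within I = at r"
proof -
  have "at r within I = at r within UNIV"
    by (rule at_within_nhd[of _ "{0<..} \<inter> {s. ereal s < R}"])
       (use assms open_ereal_lt in \<open>auto simp: memI\<close>)
  then show ?thesis by simp
qed

lemma vder: "r \<in> I \<Longrightarrow> (v has_real_derivative v' r) (at r within I)"
  using sol by (simp add: is_sol_def)
lemma vder_at: "r \<in> I \<Longrightarrow> 0 < r \<Longrightarrow> (v has_real_derivative v' r) (at r)"
  by (metis vder at_I)
lemma v'_cont: "continuous_on I v'" using sol by (simp add: is_sol_def)
lemma v_0: "v 0 = v0" using sol by (simp add: is_sol_def)
lemma v'_0: "v' 0 = 0" using sol by (simp add: is_sol_def)
lemma v'_nonneg: "r \<in> I \<Longrightarrow> 0 \<le> v' r" using sol by (simp add: is_sol_def)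
lemma Phi_der: "r \<in> I \<Longrightarrow> 0 < r \<Longrightarrow> (Phi has_real_derivative r^(n-1) * h r) (at r)"
  using sol unfolding is_sol_def Phi_def h_def by blast

lemma v_cont: "continuous_on I v"
  using vder by (meson DERIV_continuous continuous_on_eq_continuous_within)

lemma v_mono: assumes "r \<in> I" "0 \<le> s" "s \<le> r" shows "v s \<le> v r"
proof (rule DERIV_nonneg_imp_increasing_open[OF assms(3)])
  fix x assume "s < x" "x < r"
  then have "x \<in> I" "0 < x" using memI_le[OF assms(1)] assms by auto
  then show "\<exists>y. (v has_real_derivative y) (at x) \<and> 0 \<le> y"
    using vder_at v'_nonneg by blast
next
  show "continuous_on {s..r} v" using v_cont interval_I[OF assms(1,2)] continuous_on_subset by blast
qed

lemma v_ge: "r \<in> I \<Longrightarrow> v0 \<le> v r" using v_mono[of r 0] v_0 by (simp add: memI)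
lemma v_pos: "r \<in> I \<Longrightarrow> 0 < v r" using v_ge v0 by fastforce

lemma h_pos: "r \<in> I \<Longrightarrow> 0 < h r"
  unfolding h_def using f_pos[OF v_pos] g_nonneg[OF v'_nonneg] by (simp add: add_pos_nonneg)

lemma h_cont: "continuous_on I h"
proof -
  have "continuous_on I (\<lambda>s. f (v s))"
    by (rule continuous_on_compose2[OF f_cont v_cont]) (use v_pos in \<open>auto simp: less_imp_le\<close>)
  moreover have "continuous_on I (\<lambda>s. g (v' s))"
    by (rule continuous_on_compose2[OF g_cont v'_cont]) (use v'_nonneg in auto)
  ultimately show ?thesis unfolding h_def by (intro continuous_intros)
qed

lemma Phi_cont: "continuous_on I Phi"
  unfolding Phi_def using p v'_nonneg
  by (intro continuous_intros continuous_on_powr' v'_cont) auto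

lemma Phi_0: "Phi 0 = 0" using p by (simp add: Phi_def v'_0)

lemma psi_cont: "continuous_on I psi"
  unfolding psi_def using p v'_nonneg
  by (intro continuous_intros continuous_on_powr' v'_cont) auto

lemma openI: "open ({0<..} \<inter> {s. ereal s < R})" using open_ereal_lt by (intro open_Int) auto
lemma openI_mem: "r \<in> I \<Longrightarrow> 0 < r \<Longrightarrow> r \<in> {0<..} \<inter> {s. ereal s < R}" by (auto simp: memI)
lemma openI_sub: "x \<in> {0<..} \<inter> {s. ereal s < R} \<Longrightarrow> x \<in> I \<and> 0 < x" by (auto simp: memI)

lemma Phi_pos: assumes "r \<in> I" "0 < r" shows "0 < Phi r"
proof -
  have "\<exists>l z. 0 < z \<and> z < r \<and> DERIV Phi z :> l \<and> Phi r - Phi 0 = (r - 0) * l"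
  proof (rule MVT)
    show "continuous_on {0..r} Phi" using Phi_cont interval_I[OF assms(1)] continuous_on_subset by blast
    fix x assume "0 < x" "x < r"
    then show "Phi differentiable (at x)"
      using Phi_der memI_le[OF assms(1)] real_differentiable_def by (meson less_imp_le)
  qed (use assms in auto)
  then obtain l z where z: "0 < z" "z < r" "DERIV Phi z :> l" "Phi r - Phi 0 = r * l" by auto
  have zI: "z \<in> I" using memI_le[OF assms(1)] z by auto
  have "l = z^(n-1) * h z" using DERIV_unique[OF z(3) Phi_der[OF zI z(1)]] .
  then have "0 < l" using h_pos[OF zI] z by simp
  then show ?thesis using z assms Phi_0 by simp
qed

lemma v'_pos: assumes "r \<in> I" "0 < r" shows "0 < v' r"
proof -
  have "v' r \<noteq> 0"
  proof
    assume "v' r = 0"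
    then have "Phi r = 0" using p by (simp add: Phi_def)
    then show False using Phi_pos[OF assms] by simp
  qed
  then show ?thesis using v'_nonneg[OF assms(1)] by simp
qed

lemma psi_eq: "0 < r \<Longrightarrow> psi r = Phi r / r^(n-1)" by (simp add: psi_def Phi_def)
lemma psi_pos: assumes "r \<in> I" "0 < r" shows "0 < psi r"
proof -
  have "0 < v' r" by (rule v'_pos[OF assms])
  then show ?thesis by (simp add: psi_def)
qed
lemma v'_psi: "r \<in> I \<Longrightarrow> v' r = psi r powr (1/(p-1))"
  using v'_nonneg p by (simp add: psi_def powr_powr powr_one)

definition dpsi where "dpsi r = h r - (n-1) * Phi r / r^n"

lemma psi_der: assumes "r \<in> I" "0 < r" shows "(psi has_real_derivative dpsi r) (at r)"
proof -
  define m where "m = n - 1"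
  have nm: "n = m + 1" using n m_def by simp
  have "((\<lambda>s. Phi s / s^m) has_real_derivative
      ((r^m * h r) * r^m - Phi r * (real m * r^(m-1))) / (r^m * r^m)) (at r)"
    using Phi_der[OF assms] assms(2) unfolding m_def[symmetric]
    by (intro derivative_eq_intros) auto
  moreover have "real m * r^(m-1) = real m * r^m / r" using assms(2)
    by (cases m) auto
  note key = this
  have "((r^m * h r) * r^m - Phi r * (real m * r^m / r)) / (r^m * r^m) = h r - m * Phi r / (r * r^m)"
    using assms(2) by (simp add: field_simps)
  then have "((r^m * h r) * r^m - Phi r * (real m * r^(m-1))) / (r^m * r^m) = h r - m * Phi r / (r * r^m)"
    unfolding key .
  moreover have "real (n-1) = m" "r^n = r * r^m" using nm by auto
  then have "dpsi r = h r - m * Phi r / (r * r^m)" unfolding dpsi_def by simp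
  ultimately have "((\<lambda>s. Phi s / s^m) has_real_derivative dpsi r) (at r)"
    by metis
  then show ?thesis
    by (rule has_field_derivative_transform_within_open[OF _ openI openI_mem[OF assms]])
       (use psi_eq m_def openI_sub in auto)
qed

lemma aux_ineq: fixes a b t :: real assumes "a \<le> b * t^k / k" "0 < t" "k \<ge> 1"
  shows "real (k-1) * a / t^k \<le> real (k-1) * (b / k)"
proof -
  have "a / t^k \<le> b / k" using assms by (simp add: field_simps)
  from mult_left_mono[OF this, of "real (k-1)"] show ?thesis by simp
qed

lemma D_lemma: assumes "t \<in> I" "0 < t" "\<And>u. 0 \<le> u \<Longrightarrow> u \<le> t \<Longrightarrow> h u \<le> h t"
  shows "Phi t \<le> h t * t^n / n"
proof -
  define D where "D u = h t * u^n / n - Phi u" for u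
  have "D 0 \<le> D t"
  proof (rule DERIV_nonneg_imp_increasing_open[of 0 t D])
    fix x assume x: "0 < x" "x < t"
    have xI: "x \<in> I" using memI_le[OF assms(1)] x by auto
    have "(D has_real_derivative h t * (n * x^(n-1)) / n - x^(n-1) * h x) (at x)"
      unfolding D_def using Phi_der[OF xI x(1)] n by (intro derivative_eq_intros) auto
    moreover have "0 \<le> h t * (n * x^(n-1)) / n - x^(n-1) * h x"
      using n assms(3)[of x] x by (simp add: algebra_simps mult_left_mono)
    ultimately show "\<exists>y. (D has_real_derivative y) (at x) \<and> 0 \<le> y" by blast
  next
    have "continuous_on {0..t} Phi" by (rule continuous_on_subset[OF Phi_cont interval_I[OF assms(1)]]) simp
    then show "continuous_on {0..t} D" unfolding D_def
      using n by (intro continuous_intros) auto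
  qed (use assms in auto)
  moreover have "D 0 = 0" using n Phi_0 by (simp add: D_def)
  ultimately show ?thesis by (simp add: D_def)
qed

lemma dpsi_ge_of: assumes "r \<in> I" "0 < r" "\<And>u. 0 \<le> u \<Longrightarrow> u \<le> r \<Longrightarrow> h u \<le> h r"
  shows "h r / n \<le> dpsi r"
proof -
  have "Phi r \<le> h r * r^n / n" using D_lemma[OF assms] by blast
  then have "real (n-1) * Phi r / r^n \<le> real (n-1) * (h r / n)"
    using assms n by (intro aux_ineq) auto
  moreover have "real (n-1) * (h r / n) = h r - h r / n" using n by (simp add: field_simps of_nat_diff)
  ultimately show ?thesis unfolding dpsi_def by linarith
qed

lemma v'_mono: assumes "r \<in> I" "0 \<le> s" "s \<le> r" shows "v' s \<le> v' r"
proof (rule ccontr)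
  assume contra: "\<not> v' s \<le> v' r"
  have cc: "continuous_on {0..r} v'"
    by (rule continuous_on_subset[OF v'_cont interval_I[OF assms(1)]]) simp
  have ne: "{0..r} \<noteq> {}" using assms by auto
  obtain c where c: "c \<in> {0..r}" "\<And>y. y \<in> {0..r} \<Longrightarrow> v' y \<le> v' c"
    using continuous_attains_sup[OF compact_Icc ne cc] by blast
  have "v' s \<le> v' c" using c assms by auto
  then have vc: "v' r < v' c" using contra by simp
  have "c \<noteq> 0" using vc v'_0 v'_nonneg[OF assms(1)] by auto
  then have c0: "0 < c" "c < r" using c vc by (auto simp: less_le)
  have cI: "c \<in> I" using memI_le[OF assms(1)] c0 by auto
  have hc: "h u \<le> h c" if "0 \<le> u" "u \<le> c" for u
  proof -
    have uI: "u \<in> I" using memI_le[OF cI] that by auto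
    have "f (v u) \<le> f (v c)" using f_le v_mono[OF cI that] v_pos[OF uI] by auto
    moreover have "g (v' u) \<le> g (v' c)" using g_le c(2)[of u] that c0 v'_nonneg[OF uI] by auto
    ultimately show ?thesis by (simp add: h_def)
  qed
  have "dpsi c \<ge> h c / n" using dpsi_ge_of[OF cI c0(1) hc] .
  moreover have "0 < h c / n" using h_pos[OF cI] n by simp
  ultimately have "0 < dpsi c" by linarith
  then obtain d where d: "d > 0" "\<And>e. e > 0 \<Longrightarrow> e < d \<Longrightarrow> psi c < psi (c + e)"
    using DERIV_pos_inc_right[OF psi_der[OF cI c0(1)]] by blast
  define e where "e = min (d/2) ((r - c)/2)"
  have "e \<le> (r - c)/2" unfolding e_def by (rule min.cobounded2)
  then have e: "0 < e" "e < d" "c + e \<le> r" using d c0 by (auto simp: e_def)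
  have ceI: "c + e \<in> I" using memI_le[OF assms(1)] e c0 by auto
  have "psi c < psi (c + e)" using d e by auto
  moreover have "v' (c + e) \<le> v' c" using c(2) e c0 by auto
  then have "psi (c+e) \<le> psi c" unfolding psi_def using p v'_nonneg[OF ceI] by (intro powr_mono2) auto
  ultimately show False by simp
qed

lemma dpsi_ge: assumes "r \<in> I" "0 < r" shows "h r / n \<le> dpsi r"
proof -
  have hc: "h u \<le> h r" if "0 \<le> u" "u \<le> r" for u
  proof -
    have uI: "u \<in> I" using memI_le[OF assms(1)] that by auto
    have "f (v u) \<le> f (v r)" using f_le v_mono[OF assms(1) that] v_pos[OF uI] by auto
    moreover have "g (v' u) \<le> g (v' r)" using g_le v'_mono[OF assms(1) that] v'_nonneg[OF uI] by auto
    ultimately show ?thesis by (simp add: h_def)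
  qed
  show ?thesis using dpsi_ge_of[OF assms hc] .
qed

lemma dpsi_le: assumes "r \<in> I" "0 < r" shows "dpsi r \<le> h r"
  using Phi_pos[OF assms] assms n unfolding dpsi_def by simp

definition ddv where "ddv r = v' r * dpsi r / ((p-1) * psi r)"

lemma v'_der: assumes "r \<in> I" "0 < r" shows "(v' has_real_derivative ddv r) (at r)"
proof -
  have ps: "0 < psi r" using psi_pos[OF assms] .
  have "((\<lambda>s. psi s powr (1/(p-1))) has_real_derivative
          (1/(p-1)) * psi r powr (1/(p-1) - 1) * dpsi r) (at r)"
    by (rule DERIV_chain2[OF has_real_derivative_powr[OF ps] psi_der[OF assms]])
  moreover have "psi r powr (1/(p-1) - 1) = v' r / psi r"
    using ps v'_psi[OF assms(1)] by (simp add: powr_diff)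
  ultimately have "((\<lambda>s. psi s powr (1/(p-1))) has_real_derivative ddv r) (at r)"
    unfolding ddv_def by simp
  then show ?thesis
    by (rule has_field_derivative_transform_within_open[OF _ openI openI_mem[OF assms]])
       (use v'_psi openI_sub in auto)
qed

end

lemma nn_fin_bound:
  fixes h :: "real \<Rightarrow> real"
  assumes hc: "continuous_on {1..} h" and hn: "\<And>x. x \<ge> 1 \<Longrightarrow> 0 \<le> h x"
    and fin: "(\<integral>\<^sup>+ s\<in>{1..}. ennreal (h s) \<partial>lborel) < \<infinity>"
  shows "\<exists>B. \<forall>x\<ge>1. integral {1..x} h \<le> B"
proof -
  define N where "N = (\<integral>\<^sup>+ s\<in>{1..}. ennreal (h s) \<partial>lborel)"
  have "integral {1..x} h \<le> enn2real N" if x: "x \<ge> 1" for x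
  proof -
    have "continuous_on {1..x} h" using continuous_on_subset[OF hc] by auto
    then have hi: "(h has_integral integral {1..x} h) {1..x}"
      using integrable_continuous_real has_integral_integral by blast
    have "ennreal (integral {1..x} h) = (\<integral>\<^sup>+ s. ennreal (h s) * indicator {1..x} s \<partial>lborel)"
      using nn_integral_has_integral_lebesgue'[OF _ hi] hn by auto
    also have "\<dots> \<le> N" unfolding N_def
      by (intro nn_integral_mono mult_left_mono) (auto simp: indicator_def)
    finally have le: "ennreal (integral {1..x} h) \<le> N" .
    have "0 \<le> integral {1..x} h" using has_integral_nonneg[OF hi] hn by auto
    then show ?thesis using le fin unfolding N_def
      by (metis enn2real_ennreal enn2real_mono infinity_ennreal_def)
  qed
  then show ?thesis by blast
qed

lemma nn_bound_fin:
  fixes h :: "real \<Rightarrow> real"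
  assumes hc: "continuous_on {1..} h" and hn: "\<And>x. x \<ge> 1 \<Longrightarrow> 0 \<le> h x"
    and bd: "\<And>x. x \<ge> 1 \<Longrightarrow> integral {1..x} h \<le> B"
  shows "(\<integral>\<^sup>+ s\<in>{1..}. ennreal (h s) \<partial>lborel) < \<infinity>"
proof -
  define F where "F k x = (if x \<in> {..1 + real k} then h x else 0)" for k :: nat and x
  have ci: "continuous_on {1..y} h" for y using continuous_on_subset[OF hc] by auto
  have intF: "(F k) integrable_on {1..}" "integral {1..} (F k) = integral {1..1 + real k} h" for k
  proof -
    have eq: "{..1 + real k} \<inter> {1..} = {1..1 + real k}" by auto
    have "h integrable_on {1..1 + real k}" using integrable_continuous_real[OF ci] .
    then show "(F k) integrable_on {1..}" unfolding F_def
      using integrable_restrict_Int[where f=h and S="{..1 + real k}" and T="{1..}"] eq by simp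
    show "integral {1..} (F k) = integral {1..1 + real k} h" unfolding F_def
      using Henstock_Kurzweil_Integration.integral_restrict_Int[where f=h and S="{..1 + real k}" and T="{1..}"] eq by simp
  qed
  have "h integrable_on {1..} \<and> ((\<lambda>k. integral {1..} (F k)) \<longlonglongrightarrow> integral {1..} h)"
  proof (rule monotone_convergence_increasing)
    show "F k integrable_on {1..}" for k by (rule intF(1))
    show "F k x \<le> F (Suc k) x" if "x \<in> {1..}" for k x using hn that by (auto simp: F_def)
    show "(\<lambda>k. F k x) \<longlonglongrightarrow> h x" if "x \<in> {1..}" for x
    proof (rule tendsto_eventually)
      obtain k0 :: nat where "x \<le> real k0" using real_arch_simple by blast
      then show "\<forall>\<^sub>F k in sequentially. F k x = h x"
        unfolding F_def eventually_sequentially by (intro exI[of _ k0]) auto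
    qed
    have "\<bar>integral {1..} (F k)\<bar> \<le> B" for k
    proof -
      have "0 \<le> integral {1..1 + real k} h" using integral_nonneg[OF integrable_continuous_real[OF ci]] hn by auto
      then show ?thesis using bd[of "1 + real k"] intF(2)[of k] by auto
    qed
    then show "bounded (range (\<lambda>k. integral {1..} (F k)))"
      unfolding bounded_iff by auto
  qed
  then have "(h has_integral integral {1..} h) {1..}" by blast
  from nn_integral_has_integral_lebesgue'[OF _ this] hn
  have "(\<integral>\<^sup>+ s. ennreal (h s) * indicator {1..} s \<partial>lborel) = ennreal (integral {1..} h)" by auto
  then show ?thesis by simp
qed

lemma integral_deriv_at:
  fixes h :: "real \<Rightarrow> real"
  assumes hc: "continuous_on {1..} h" and x: "1 < x"
  shows "((\<lambda>y. integral {1..y} h) has_real_derivative h x) (at x)"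
proof -
  have c: "continuous_on {1..x+1} h" using continuous_on_subset[OF hc] by auto
  have "((\<lambda>y. integral {1..y} h) has_real_derivative h x) (at x within {1..x+1})"
    using integral_has_real_derivative[OF c] x by auto
  moreover have "at x within {1..x+1} = at x"
    using x by (intro at_within_interior) auto
  ultimately show ?thesis by simp
qed

lemma tail_fun:
  fixes H :: "real \<Rightarrow> real"
  assumes hc: "continuous_on {1..} H" and hn: "\<And>x. x \<ge> 1 \<Longrightarrow> 0 \<le> H x"
    and fin: "(\<integral>\<^sup>+ s\<in>{1..}. ennreal (H s) \<partial>lborel) < \<infinity>"
  obtains T where "\<And>x. x \<ge> 1 \<Longrightarrow> 0 \<le> T x" "\<And>x. x > 1 \<Longrightarrow> (T has_real_derivative - H x) (at x)"
proof -
  obtain B where B: "\<And>x. x \<ge> 1 \<Longrightarrow> integral {1..x} H \<le> B" using nn_fin_bound[OF hc hn fin] by blast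
  show ?thesis
  proof (rule that[of "\<lambda>x. B - integral {1..x} H"])
    show "0 \<le> B - integral {1..x} H" if "x \<ge> 1" for x using B[OF that] by simp
    show "((\<lambda>x. B - integral {1..x} H) has_real_derivative - H x) (at x)" if "x > 1" for x
      using DERIV_diff[OF DERIV_const integral_deriv_at[OF hc that]] by simp
  qed
qed

lemma nonincr:
  fixes Z Z' :: "real \<Rightarrow> real"
  assumes "a \<le> b" "\<And>x. a \<le> x \<Longrightarrow> x \<le> b \<Longrightarrow> (Z has_real_derivative Z' x) (at x)"
    "\<And>x. a \<le> x \<Longrightarrow> x \<le> b \<Longrightarrow> Z' x \<le> 0"
  shows "Z b \<le> Z a"
proof -
  have "(\<lambda>x. - Z x) a \<le> (\<lambda>x. - Z x) b"
  proof (rule DERIV_nonneg_imp_nondecreasing[of a b "\<lambda>x. - Z x", OF assms(1)])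
    fix x assume "a \<le> x" "x \<le> b"
    then show "\<exists>y. ((\<lambda>x. - Z x) has_real_derivative y) (at x) \<and> 0 \<le> y"
      using DERIV_minus[OF assms(2)] assms(3) by (intro exI[of _ "- Z' x"]) auto
  qed
  then show ?thesis by simp
qed

lemma nondecr:
  fixes Z Z' :: "real \<Rightarrow> real"
  assumes "a \<le> b" "\<And>x. a \<le> x \<Longrightarrow> x \<le> b \<Longrightarrow> (Z has_real_derivative Z' x) (at x)"
    "\<And>x. a \<le> x \<Longrightarrow> x \<le> b \<Longrightarrow> 0 \<le> Z' x"
  shows "Z a \<le> Z b"
  using nonincr[of a b "\<lambda>x. - Z x" "\<lambda>x. - Z' x"] assms DERIV_minus by fastforce

context ctx begin

lemma ddv_eq: assumes "x \<in> I" "0 < x" shows "ddv x * v' x powr (p-1) = v' x * dpsi x / (p-1)"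
  using psi_pos[OF assms] p unfolding ddv_def psi_def by (simp add: field_simps)

lemma pm2: assumes "x \<in> I" "0 < x" shows "v' x powr (p-2) * v' x = v' x powr (p-1)"
proof -
  have "v' x powr (p-1) = v' x powr ((p-2) + 1)" by simp
  also have "\<dots> = v' x powr (p-2) * v' x" using v'_pos[OF assms] by (simp only: powr_add) simp
  finally show ?thesis by simp
qed

lemma f_v_le_h: "x \<in> I \<Longrightarrow> f (v x) \<le> h x" unfolding h_def using g_nonneg v'_nonneg by simp
lemma g_v'_le_h: "x \<in> I \<Longrightarrow> g (v' x) \<le> h x" unfolding h_def using f_pos v_pos
  by (simp add: less_imp_le)
lemma h_ge_fv0: "x \<in> I \<Longrightarrow> f v0 \<le> h x" using f_v_le_h f_le v_ge v0 by (meson less_imp_le order_trans)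

lemma psi_lin: assumes "r0 \<in> I" "0 < r0" "r0 \<le> r" "r \<in> I"
  shows "psi r0 + (r - r0) * f v0 / n \<le> psi r"
proof -
  have "(\<lambda>x. psi x - x * f v0 / n) r0 \<le> (\<lambda>x. psi x - x * f v0 / n) r"
  proof (rule nondecr[OF assms(3)])
    fix x assume x: "r0 \<le> x" "x \<le> r"
    have xI: "x \<in> I" "0 < x" using memI_le[OF assms(4)] x assms by auto
    show "((\<lambda>x. psi x - x * f v0 / n) has_real_derivative dpsi x - f v0 / n) (at x)"
      using psi_der[OF xI] n by (auto intro!: derivative_eq_intros)
    have "f v0 / n \<le> h x / n" using h_ge_fv0[OF xI(1)] by (simp add: divide_right_mono)
    then show "0 \<le> dpsi x - f v0 / n" using dpsi_ge[OF xI] by simp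
  qed
  then show ?thesis by (simp add: algebra_simps diff_divide_distrib)
qed

lemma v'_gt1_of_psi: "x \<in> I \<Longrightarrow> 1 < psi x \<Longrightarrow> 1 < v' x"
  using v'_psi p by simp

lemma v_lin: assumes "r0 \<in> I" "0 < r0" "r0 \<le> r" "r \<in> I"
  shows "v r0 + (r - r0) * v' r0 \<le> v r"
proof -
  have "(\<lambda>x. v x - x * v' r0) r0 \<le> (\<lambda>x. v x - x * v' r0) r"
  proof (rule nondecr[OF assms(3)])
    fix x assume x: "r0 \<le> x" "x \<le> r"
    have xI: "x \<in> I" "0 < x" using memI_le[OF assms(4)] x assms by auto
    show "((\<lambda>x. v x - x * v' r0) has_real_derivative v' x - v' r0) (at x)"
      using vder_at[OF xI] by (auto intro!: derivative_eq_intros)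
    show "0 \<le> v' x - v' r0" using v'_mono[OF xI(1)] x assms by simp
  qed
  then show ?thesis by (simp add: algebra_simps)
qed

end

context ctx begin

lemma H_g_ddv: assumes "x \<in> I" "0 < x"
  shows "v' x powr (p-2) / g (v' x) * ddv x = dpsi x / ((p-1) * g (v' x))"
proof -
  have vp: "0 < v' x" using v'_pos[OF assms] .
  have "ddv x * (v' x powr (p-2) * v' x) = v' x * dpsi x / (p-1)"
    using ddv_eq[OF assms] pm2[OF assms] by simp
  then have "v' x * (ddv x * v' x powr (p-2) * (p-1)) = v' x * dpsi x" using p by (simp add: field_simps)
  then have "ddv x * v' x powr (p-2) * (p-1) = dpsi x" using vp by simp
  then have "ddv x * v' x powr (p-2) = dpsi x / (p-1)"
    using p by (simp add: field_simps)
  then show ?thesis by (simp add: field_simps)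
qed

lemma R_fin_g: assumes Rinf: "R = \<infinity>"
  and fin: "(\<integral>\<^sup>+ s\<in>{1..}. ennreal (s powr (p - 2) / g s) \<partial>lborel) < \<infinity>"
  shows False
proof -
  have inI: "\<And>r. 0 \<le> r \<Longrightarrow> r \<in> I" using Rinf by (simp add: ivl0_def)
  define H where "H t = t powr (p-2) / g t" for t
  have gc1: "continuous_on {1..} g" using continuous_on_subset[OF g_cont] by auto
  have gne: "g t \<noteq> 0" if "t \<in> {1..}" for t using g_pos[of t] that by simp
  have Hc: "continuous_on {1..} H" unfolding H_def
    using gne by (intro continuous_intros gc1) auto
  have Hn: "0 \<le> H x" if "x \<ge> 1" for x unfolding H_def using g_pos[of x] that by simp
  obtain T where T0: "\<And>x. x \<ge> 1 \<Longrightarrow> 0 \<le> T x"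
    and Td: "\<And>x. x > 1 \<Longrightarrow> (T has_real_derivative - H x) (at x)"
    using tail_fun[OF Hc Hn fin[folded H_def]] by blast
  have fv0: "0 < f v0" using f_pos v0 by simp
  define r1 where "r1 = 1 + n * (2 + \<bar>psi 1\<bar>) / f v0"
  have r1: "1 \<le> r1" unfolding r1_def using fv0 n by simp
  have "psi 1 + (r1 - 1) * f v0 / n \<le> psi r1"
    using psi_lin[OF inI _ r1 inI] r1 by simp
  moreover have "(r1 - 1) * f v0 / n = 2 + \<bar>psi 1\<bar>" unfolding r1_def using fv0 n by simp
  ultimately have "psi 1 + (2 + \<bar>psi 1\<bar>) \<le> psi r1" by simp
  moreover have "- psi 1 \<le> \<bar>psi 1\<bar>" by simp
  ultimately have "1 < psi r1" by linarith
  then have v'r1: "1 < v' r1" using v'_gt1_of_psi inI r1 by simp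
  define c where "c = 1 / (n * (p-1))"
  have c0: "0 < c" unfolding c_def using n p by simp
  define Z where "Z x = T (v' x) + x * c" for x
  have Zle: "Z x \<le> Z r1" if x: "r1 \<le> x" for x
  proof (rule nonincr[OF x])
    fix y assume y: "r1 \<le> y" "y \<le> x"
    have yI: "y \<in> I" "0 < y" using inI r1 y by auto
    have v'y: "1 < v' y" using v'_mono[OF yI(1), of r1] v'r1 r1 y by simp
    show "(Z has_real_derivative (- H (v' y)) * ddv y + c) (at y)"
      unfolding Z_def using DERIV_chain2[OF Td[OF v'y] v'_der[OF yI]]
      by (auto intro!: derivative_eq_intros)
    have "H (v' y) * ddv y = dpsi y / ((p-1) * g (v' y))" unfolding H_def using H_g_ddv[OF yI] .
    moreover have "g (v' y) / n \<le> dpsi y"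
      using dpsi_ge[OF yI] g_v'_le_h[OF yI(1)] n by (meson divide_right_mono of_nat_0_le_iff order_trans)
    moreover have "0 < g (v' y)" using g_pos v'y by simp
    ultimately have A: "H (v' y) * ddv y = dpsi y / ((p-1) * g (v' y))" "g (v' y) / n \<le> dpsi y" "0 < g (v' y)"
      by auto
    have "g (v' y) / n / ((p-1) * g (v' y)) \<le> dpsi y / ((p-1) * g (v' y))"
      using A p by (intro divide_right_mono) auto
    moreover have "g (v' y) / n / ((p-1) * g (v' y)) = c"
    proof -
      have "p - 1 \<noteq> 0" "real n \<noteq> 0" "g (v' y) \<noteq> 0" using p n A by auto
      then show ?thesis unfolding c_def by (simp add: field_simps)
    qed
    ultimately have "c \<le> H (v' y) * ddv y" using A by simp
    then show "(- H (v' y)) * ddv y + c \<le> 0" by simp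
  qed
  define x where "x = r1 + \<bar>Z r1\<bar> / c + 1"
  have "r1 \<le> x" unfolding x_def using c0 by simp
  then have "Z x \<le> Z r1" by (rule Zle)
  moreover have "0 \<le> T (v' x)"
  proof -
    have "1 < v' x" using v'_mono[OF inI, of x r1] v'r1 r1 \<open>r1 \<le> x\<close> by simp
    then show ?thesis using T0 by simp
  qed
  moreover have "x * c = r1 * c + \<bar>Z r1\<bar> + c" unfolding x_def using c0 by (simp add: field_simps)
  ultimately show False unfolding Z_def using c0 r1 by (smt (verit) mult_nonneg_nonneg)
qed

end

context ctx begin

lemma f_cont_T: "continuous_on {0..T} f" using continuous_on_subset[OF f_cont] by auto

lemma prim_der: assumes "0 < t" shows "(prim f has_real_derivative f t) (at t)"
proof -
  have "((\<lambda>y. integral {0..y} f) has_real_derivative f t) (at t within {0..t+1})"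
    using integral_has_real_derivative[OF f_cont_T] assms by auto
  moreover have "at t within {0..t+1} = at t"
    using assms by (intro at_within_interior) auto
  ultimately show ?thesis unfolding prim_def[abs_def] by simp
qed

lemma prim_0: "prim f 0 = 0" by (simp add: prim_def)

lemma prim_cont: "continuous_on {0..T} (prim f)"
  unfolding prim_def[abs_def]
  by (rule indefinite_integral_continuous_1[OF integrable_continuous_real[OF f_cont_T]])

lemma prim_pos: assumes "0 < t" shows "0 < prim f t"
proof -
  have "\<exists>l z. 0 < z \<and> z < t \<and> DERIV (prim f) z :> l \<and> prim f t - prim f 0 = (t - 0) * l"
    by (rule MVT) (use assms prim_cont prim_der real_differentiable_def in auto)
  then obtain l z where z: "0 < z" "z < t" "DERIV (prim f) z :> l" "prim f t - prim f 0 = t * l" by auto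
  have "l = f z" using DERIV_unique[OF z(3) prim_der[OF z(1)]] .
  then show ?thesis using z f_pos[of z] assms prim_0 by simp
qed

lemma prim_mono: assumes "0 < a" "a \<le> b" shows "prim f a \<le> prim f b"
  by (rule nondecr[OF assms(2), of _ f]) (use assms prim_der f_pos in \<open>auto simp: less_imp_le\<close>)

lemma prim_lin: assumes "1 \<le> t" shows "(t - 1) * f 1 \<le> prim f t"
proof -
  have "(\<lambda>x. prim f x - x * f 1) 1 \<le> (\<lambda>x. prim f x - x * f 1) t"
  proof (rule nondecr[OF assms])
    fix x assume x: "1 \<le> x" "x \<le> t"
    show "((\<lambda>x. prim f x - x * f 1) has_real_derivative f x - f 1) (at x)"
      using prim_der[of x] x by (auto intro!: derivative_eq_intros)
    show "0 \<le> f x - f 1" using f_le[of 1 x] x by simp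
  qed
  then show ?thesis using prim_pos[of 1] by (simp add: algebra_simps)
qed

lemma R_fin_F: assumes Rinf: "R = \<infinity>"
  and fin: "(\<integral>\<^sup>+ s\<in>{1..}. ennreal (1 / (prim f s) powr (1 / p)) \<partial>lborel) < \<infinity>"
  shows False
proof -
  have inI: "\<And>r. 0 \<le> r \<Longrightarrow> r \<in> I" using Rinf by (simp add: ivl0_def)
  define F where "F = prim f"
  define H where "H t = 1 / (F t) powr (1/p)" for t
  have Fc: "continuous_on {1..} F" unfolding F_def
  proof (rule continuous_at_imp_continuous_on, intro ballI)
    fix x :: real assume "x \<in> {1..}"
    then show "isCont (prim f) x" using DERIV_isCont[OF prim_der[of x]] by simp
  qed
  have Fpos: "0 < F t" if "0 < t" for t using prim_pos that by (simp add: F_def)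
  have Fne: "F t \<noteq> 0" if "t \<in> {1..}" for t using Fpos[of t] that by simp
  have Hc: "continuous_on {1..} H" unfolding H_def using Fne
    by (intro continuous_intros Fc) auto
  have Hn: "0 \<le> H x" if "x \<ge> 1" for x unfolding H_def by simp
  obtain T where T0: "\<And>x. x \<ge> 1 \<Longrightarrow> 0 \<le> T x"
    and Td: "\<And>x. x > 1 \<Longrightarrow> (T has_real_derivative - H x) (at x)"
    using tail_fun[OF Hc Hn fin[folded F_def, folded H_def]] by blast
  have I1: "1 \<in> I" using inI by simp
  have v'1: "0 < v' 1" using v'_pos[OF I1] by simp
  have f1: "0 < f 1" using f_pos by simp
  define E where "E x = (p-1)/p * v' x powr p - F (v x) / n" for x
  have Emono: "E 1 \<le> E x" if x: "1 \<le> x" for x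
  proof (rule nondecr[OF x])
    fix y assume y: "1 \<le> y" "y \<le> x"
    have yI: "y \<in> I" "0 < y" using inI y by auto
    have vp: "0 < v' y" using v'_pos[OF yI] .
    have d1: "((\<lambda>y. v' y powr p) has_real_derivative (p * v' y powr (p-1)) * ddv y) (at y)"
      using DERIV_chain2[OF has_real_derivative_powr[OF vp] v'_der[OF yI]] by simp
    have d2: "((\<lambda>y. F (v y)) has_real_derivative f (v y) * v' y) (at y)"
      using DERIV_chain2[OF prim_der[OF v_pos[OF yI(1)]] vder_at[OF yI]] unfolding F_def by simp
    show "(E has_real_derivative (p-1)/p * ((p * v' y powr (p-1)) * ddv y) - f (v y) * v' y / n) (at y)"
      unfolding E_def[abs_def] by (intro DERIV_diff DERIV_cmult DERIV_cdivide d1 d2)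
    have "(p-1)/p * ((p * v' y powr (p-1)) * ddv y) = (p-1) * (ddv y * v' y powr (p-1))"
      using p by (simp add: field_simps)
    also have "\<dots> = v' y * dpsi y" using ddv_eq[OF yI] p by simp
    finally have eq: "(p-1)/p * ((p * v' y powr (p-1)) * ddv y) = v' y * dpsi y" .
    have "f (v y) / n \<le> dpsi y"
      using dpsi_ge[OF yI] f_v_le_h[OF yI(1)] n by (meson divide_right_mono of_nat_0_le_iff order_trans)
    then have "v' y * (f (v y) / n) \<le> v' y * dpsi y" using vp by (intro mult_left_mono) auto
    then show "0 \<le> (p-1)/p * ((p * v' y powr (p-1)) * ddv y) - f (v y) * v' y / n"
      unfolding eq by (simp add: mult.commute)
  qed
  have vbound: "(F (v x) - F (v 1)) / n \<le> (p-1)/p * v' x powr p" if "1 \<le> x" for x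
  proof -
    have "E 1 \<le> E x" using Emono[OF that] .
    moreover have "0 \<le> (p-1)/p * v' 1 powr p" using p by simp
    ultimately show ?thesis unfolding E_def by (simp add: diff_divide_distrib)
  qed
  define r2 where "r2 = 1 + ((2 * F (v 1) + 1) / f 1 + 1) / v' 1"
  have r2: "1 \<le> r2" unfolding r2_def using v'1 f1 Fpos[OF v_pos[OF I1]] by simp
  define c where "c = p / (2 * n * (p-1))"
  have c0: "0 < c" unfolding c_def using p n by simp
  define c' where "c' = c powr (1/p)"
  have c'0: "0 < c'" unfolding c'_def using c0 by simp
  have key: "1 < v x \<and> c' * F (v x) powr (1/p) \<le> v' x" if x: "r2 \<le> x" for x
  proof -
    have xI: "x \<in> I" "0 < x" using inI x r2 by auto
    have "v 1 + (x - 1) * v' 1 \<le> v x" using v_lin[OF I1 _ _ xI(1)] x r2 by simp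
    moreover have "(r2 - 1) * v' 1 \<le> (x - 1) * v' 1" using x v'1 by (intro mult_right_mono) auto
    moreover have "(r2 - 1) * v' 1 = (2 * F (v 1) + 1) / f 1 + 1" unfolding r2_def using v'1 by simp
    ultimately have vx: "1 + (2 * F (v 1) + 1) / f 1 \<le> v x" using v_pos[OF I1] by linarith
    have "0 < (2 * F (v 1) + 1) / f 1" using f1 Fpos[OF v_pos[OF I1]] by simp
    then have v1: "1 < v x" using vx by linarith
    have "(v x - 1) * f 1 \<le> F (v x)" unfolding F_def using prim_lin v1 by simp
    moreover have "(2 * F (v 1) + 1) / f 1 * f 1 \<le> (v x - 1) * f 1"
      using vx f1 by (intro mult_right_mono) auto
    moreover have "(2 * F (v 1) + 1) / f 1 * f 1 = 2 * F (v 1) + 1" using f1 by simp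
    ultimately have FF: "2 * F (v 1) + 1 \<le> F (v x)" by linarith
    have "F (v x) / 2 / n \<le> (F (v x) - F (v 1)) / n"
      using FF n by (intro divide_right_mono) auto
    also have "\<dots> \<le> (p-1)/p * v' x powr p" using vbound x r2 by simp
    finally have "F (v x) / 2 / n \<le> (p-1)/p * v' x powr p" .
    then have "c * F (v x) \<le> v' x powr p" unfolding c_def using p n
      by (simp add: field_simps)
    then have "(c * F (v x)) powr (1/p) \<le> (v' x powr p) powr (1/p)"
      using c0 Fpos[of "v x"] v1 p by (intro powr_mono2) auto
    also have "\<dots> = v' x" using v'_nonneg[OF xI(1)] p by (simp add: powr_powr powr_one)
    finally have "c' * F (v x) powr (1/p) \<le> v' x"
      unfolding c'_def using c0 Fpos[of "v x"] v1 by (simp add: powr_mult)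
    then show ?thesis using v1 by simp
  qed
  define Z where "Z x = T (v x) + c' * x" for x
  have Zle: "Z x \<le> Z r2" if x: "r2 \<le> x" for x
  proof (rule nonincr[OF x])
    fix y assume y: "r2 \<le> y" "y \<le> x"
    have yI: "y \<in> I" "0 < y" using inI r2 y by auto
    have ky: "1 < v y" "c' * F (v y) powr (1/p) \<le> v' y" using key y by auto
    show "(Z has_real_derivative (- H (v y)) * v' y + c') (at y)"
      unfolding Z_def using DERIV_chain2[OF Td[OF ky(1)] vder_at[OF yI]]
      by (auto intro!: derivative_eq_intros)
    have Fp: "0 < F (v y) powr (1/p)" using Fpos[of "v y"] ky by simp
    have "c' \<le> v' y / F (v y) powr (1/p)" using ky Fp by (simp add: field_simps)
    then show "(- H (v y)) * v' y + c' \<le> 0" unfolding H_def by simp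
  qed
  define x where "x = r2 + \<bar>Z r2\<bar> / c' + 1"
  have "r2 \<le> x" unfolding x_def using c'0 by simp
  then have "Z x \<le> Z r2" by (rule Zle)
  moreover have "0 \<le> T (v x)" using key[OF \<open>r2 \<le> x\<close>] T0 by simp
  moreover have "c' * x = c' * r2 + \<bar>Z r2\<bar> + c'" unfolding x_def using c'0 by (simp add: field_simps)
  ultimately show False unfolding Z_def using c'0 r2 by (smt (verit) mult_nonneg_nonneg)
qed

end

context ctx begin

lemma Rr_pos: "R = ereal Rr \<Longrightarrow> 0 < Rr" using R_pos by simp

lemma memI_fin: "R = ereal Rr \<Longrightarrow> x \<in> I \<longleftrightarrow> 0 \<le> x \<and> x < Rr" by (simp add: ivl0_def)

lemma exists_big: assumes R: "R = ereal Rr" and lim: "filterlim v' at_top (at_left Rr)"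
  shows "\<exists>x\<in>I. 0 < x \<and> M < v' x"
proof -
  have "eventually (\<lambda>x. M < v' x) (at_left Rr)" using lim filterlim_at_top_dense by blast
  then obtain b where b: "b < Rr" "\<And>y. b < y \<Longrightarrow> y < Rr \<Longrightarrow> M < v' y"
    unfolding eventually_at_left_field by blast
  define y where "y = (max b 0 + Rr) / 2"
  have Rr: "0 < Rr" using Rr_pos[OF R] .
  have y: "b < y" "y < Rr" "0 < y" unfolding y_def using b Rr by (auto simp: max_def)
  then show ?thesis using b memI_fin[OF R] by (intro bexI[of _ y]) auto
qed

lemma H1_ddv: assumes "x \<in> I" "0 < x"
  shows "v' x powr (p-1) / g (v' x) * ddv x = v' x * dpsi x / ((p-1) * g (v' x))"
proof -
  have "v' x powr (p-1) / g (v' x) * ddv x = (ddv x * v' x powr (p-1)) / g (v' x)" by simp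
  also have "\<dots> = v' x * dpsi x / (p-1) / g (v' x)" using ddv_eq[OF assms] by simp
  finally show ?thesis by simp
qed

lemma v_bdd: assumes R: "R = ereal Rr" and lim: "filterlim v' at_top (at_left Rr)"
  and fin: "(\<integral>\<^sup>+ s\<in>{1..}. ennreal (s powr (p - 1) / g s) \<partial>lborel) < \<infinity>"
  shows "\<exists>M. \<forall>x\<in>I. v x \<le> M"
proof -
  define H where "H t = t powr (p-1) / g t" for t
  have gc1: "continuous_on {1..} g" using continuous_on_subset[OF g_cont] by auto
  have gne: "g t \<noteq> 0" if "t \<in> {1..}" for t using g_pos[of t] that by simp
  have Hc: "continuous_on {1..} H" unfolding H_def
    using gne by (intro continuous_intros gc1) auto
  have Hn: "0 \<le> H x" if "x \<ge> 1" for x unfolding H_def using g_pos[of x] that by simp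
  obtain T where T0: "\<And>x. x \<ge> 1 \<Longrightarrow> 0 \<le> T x"
    and Td: "\<And>x. x > 1 \<Longrightarrow> (T has_real_derivative - H x) (at x)"
    using tail_fun[OF Hc Hn fin[folded H_def]] by blast
  obtain r1 where r1: "r1 \<in> I" "0 < r1" "1 < v' r1" using exists_big[OF R lim, of 1] by blast
  define c where "c = 1 / (n * (p-1))"
  have c0: "0 < c" unfolding c_def using n p by simp
  define Z where "Z x = T (v' x) + v x * c" for x
  have Zle: "Z x \<le> Z r1" if x: "x \<in> I" "r1 \<le> x" for x
  proof (rule nonincr[OF x(2)])
    fix y assume y: "r1 \<le> y" "y \<le> x"
    have yI: "y \<in> I" "0 < y" using memI_le[OF x(1)] r1 y by auto
    have v'y: "1 < v' y" using v'_mono[OF yI(1), of r1] r1 y by simp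
    show "(Z has_real_derivative (- H (v' y)) * ddv y + v' y * c) (at y)"
      unfolding Z_def using DERIV_chain2[OF Td[OF v'y] v'_der[OF yI]] vder_at[OF yI]
      by (auto intro!: derivative_eq_intros)
    have A: "H (v' y) * ddv y = v' y * dpsi y / ((p-1) * g (v' y))" unfolding H_def using H1_ddv[OF yI] .
    have B: "g (v' y) / n \<le> dpsi y"
      using dpsi_ge[OF yI] g_v'_le_h[OF yI(1)] n by (meson divide_right_mono of_nat_0_le_iff order_trans)
    have gp: "0 < g (v' y)" using g_pos v'y by simp
    have vp: "0 < v' y" using v'y by simp
    have "v' y * (g (v' y) / n) / ((p-1) * g (v' y)) \<le> v' y * dpsi y / ((p-1) * g (v' y))"
      using B p gp vp by (intro divide_right_mono mult_left_mono) auto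
    moreover have "v' y * (g (v' y) / n) / ((p-1) * g (v' y)) = v' y * c"
    proof -
      have "p - 1 \<noteq> 0" "real n \<noteq> 0" "g (v' y) \<noteq> 0" using p n gp by auto
      then show ?thesis unfolding c_def by (simp add: field_simps)
    qed
    ultimately have "v' y * c \<le> H (v' y) * ddv y" using A by simp
    then show "(- H (v' y)) * ddv y + v' y * c \<le> 0" by simp
  qed
  have "v x \<le> max (v r1) (Z r1 / c)" if x: "x \<in> I" for x
  proof (cases "x \<le> r1")
    case True then show ?thesis using v_mono[OF r1(1), of x] x by (simp add: memI)
  next
    case False
    then have "Z x \<le> Z r1" using Zle x by simp
    moreover have "1 < v' x" using v'_mono[OF x, of r1] r1 False by simp
    then have "0 \<le> T (v' x)" using T0 by simp
    ultimately have "v x * c \<le> Z r1" unfolding Z_def by simp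
    then have "v x \<le> Z r1 / c" using c0 by (simp add: field_simps)
    then show ?thesis by simp
  qed
  then show ?thesis by blast
qed

lemma v_unbdd: assumes R: "R = ereal Rr" and lim: "filterlim v' at_top (at_left Rr)"
  and inf: "(\<integral>\<^sup>+ s\<in>{1..}. ennreal (s powr (p - 1) / g s) \<partial>lborel) = \<infinity>"
  shows "\<exists>x\<in>I. M < v x"
proof (rule ccontr)
  assume "\<not> ?thesis"
  then have vM: "\<And>x. x \<in> I \<Longrightarrow> v x \<le> M" by auto
  have M0: "0 < M" using vM[OF zero_I] v_0 v0 by simp
  define fM where "fM = f M"
  have fM0: "0 < fM" unfolding fM_def using f_pos M0 by simp
  have g1: "0 < g 1" using g_pos by simp
  define C where "C = 1 + fM / g 1"
  have C0: "0 < C" unfolding C_def using fM0 g1 by (simp add: add_pos_pos)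
  define H where "H t = t powr (p-1) / g t" for t
  define H2 where "H2 t = (p-1) * t powr (p-1) / (fM + g t)" for t
  have gc1: "continuous_on {1..} g" using continuous_on_subset[OF g_cont] by auto
  have gne: "g t \<noteq> 0" if "t \<in> {1..}" for t using g_pos[of t] that by simp
  have gne2: "fM + g t \<noteq> 0" if "t \<in> {1..}" for t using g_pos[of t] that fM0 by simp
  have Hc: "continuous_on {1..} H" unfolding H_def
    using gne by (intro continuous_intros gc1) auto
  have H2c: "continuous_on {1..} H2" unfolding H2_def
    using gne2 by (intro continuous_intros gc1) auto
  have Hn: "0 \<le> H x" if "x \<ge> 1" for x unfolding H_def using g_pos[of x] that by simp
  have HH2: "H t \<le> C / (p-1) * H2 t" if t: "t \<ge> 1" for t
  proof -
    have gt: "g 1 \<le> g t" using g_le t by simp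
    have gt0: "0 < g t" using g_pos t by simp
    have "fM + g t \<le> C * g t"
    proof -
      have "fM \<le> fM / g 1 * g t" using gt g1 fM0 by (simp add: field_simps)
      then show ?thesis unfolding C_def by (simp add: algebra_simps)
    qed
    then have "1 / g t \<le> C / (fM + g t)" using gt0 fM0 by (simp add: field_simps)
    then have "t powr (p-1) * (1 / g t) \<le> t powr (p-1) * (C / (fM + g t))"
      by (intro mult_left_mono) auto
    then show ?thesis unfolding H_def H2_def using p by (simp add: mult.commute)
  qed
  obtain r1 where r1: "r1 \<in> I" "0 < r1" "1 < v' r1" using exists_big[OF R lim, of 1] by blast
  define P where "P y = integral {1..y} H2" for y
  define Z where "Z x = P (v' x) - v x" for x
  have Zle: "Z x \<le> Z r1" if x: "x \<in> I" "r1 \<le> x" for x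
  proof (rule nonincr[OF x(2)])
    fix y assume y: "r1 \<le> y" "y \<le> x"
    have yI: "y \<in> I" "0 < y" using memI_le[OF x(1)] r1 y by auto
    have v'y: "1 < v' y" using v'_mono[OF yI(1), of r1] r1 y by simp
    show "(Z has_real_derivative H2 (v' y) * ddv y - v' y) (at y)"
      unfolding Z_def P_def using DERIV_chain2[OF integral_deriv_at[OF H2c v'y] v'_der[OF yI]] vder_at[OF yI]
      by (auto intro!: derivative_eq_intros)
    have gp: "0 < g (v' y)" using g_pos v'y by simp
    have vp: "0 < v' y" using v'y by simp
    have A: "H2 (v' y) * ddv y = v' y * dpsi y / (fM + g (v' y))"
    proof -
      have "H2 (v' y) * ddv y = (p-1) * (ddv y * v' y powr (p-1)) / (fM + g (v' y))"
        unfolding H2_def by simp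
      also have "\<dots> = v' y * dpsi y / (fM + g (v' y))" using ddv_eq[OF yI] p by simp
      finally show ?thesis .
    qed
    have "dpsi y \<le> fM + g (v' y)"
    proof -
      have "f (v y) \<le> fM" unfolding fM_def using f_le v_pos[OF yI(1)] vM[OF yI(1)] by simp
      then show ?thesis using dpsi_le[OF yI] unfolding h_def by simp
    qed
    then have "v' y * dpsi y \<le> v' y * (fM + g (v' y))" using vp by (intro mult_left_mono) auto
    then have "v' y * dpsi y / (fM + g (v' y)) \<le> v' y"
      using gp fM0 by (simp add: pos_divide_le_eq)
    then show "H2 (v' y) * ddv y - v' y \<le> 0" using A by simp
  qed
  define B where "B = C / (p-1) * (Z r1 + M)"
  have "integral {1..y} H \<le> B" if y: "1 \<le> y" for y
  proof -
    obtain x0 where x0: "x0 \<in> I" "0 < x0" "y < v' x0" using exists_big[OF R lim, of y] by blast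
    define x where "x = max x0 r1"
    have xI: "x \<in> I" using x0 r1 by (simp add: x_def max_def)
    have xr1: "r1 \<le> x" unfolding x_def by simp
    have yx: "y \<le> v' x" using v'_mono[OF xI, of x0] x0 unfolding x_def by (simp add: memI)
    have ci: "continuous_on {1..u} H" for u using continuous_on_subset[OF Hc] by auto
    have ci2: "continuous_on {1..u} H2" for u using continuous_on_subset[OF H2c] by auto
    have "integral {1..y} H \<le> integral {1..v' x} H"
      using yx Hn by (intro integral_subset_le integrable_continuous_real ci) auto
    also have "\<dots> \<le> integral {1..v' x} (\<lambda>t. C / (p-1) * H2 t)"
      using HH2 p by (intro integral_le integrable_continuous_real ci) (auto intro!: continuous_intros ci2)
    also have "\<dots> = C / (p-1) * P (v' x)" unfolding P_def by simp
    also have "\<dots> \<le> C / (p-1) * (Z r1 + M)"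
    proof -
      have "P (v' x) \<le> Z r1 + M" using Zle[OF xI xr1] vM[OF xI] unfolding Z_def by simp
      then show ?thesis using C0 p by (intro mult_left_mono) auto
    qed
    finally show ?thesis unfolding B_def .
  qed
  then have "(\<integral>\<^sup>+ s\<in>{1..}. ennreal (H s) \<partial>lborel) < \<infinity>" by (intro nn_bound_fin[OF Hc Hn])
  then show False using inf unfolding H_def by simp
qed

lemma v_lim_of_unbdd: assumes R: "R = ereal Rr" and ub: "\<And>M. \<exists>x\<in>I. M < v x"
  shows "filterlim v at_top (at_left Rr)"
  unfolding filterlim_at_top
proof
  fix M
  obtain x where x: "x \<in> I" "M < v x" using ub by blast
  have "x < Rr" using x memI_fin[OF R] by auto
  moreover have "\<forall>y>x. y < Rr \<longrightarrow> M \<le> v y"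
  proof (intro allI impI)
    fix y assume "x < y" "y < Rr"
    then have "y \<in> I" using x memI_fin[OF R] by auto
    then show "M \<le> v y" using v_mono[of y x] x \<open>x < y\<close> by (auto simp: memI)
  qed
  ultimately show "eventually (\<lambda>y. M \<le> v y) (at_left Rr)"
    unfolding eventually_at_left_field by blast
qed

lemma v_not_lim_of_bdd: assumes R: "R = ereal Rr" and bd: "\<And>x. x \<in> I \<Longrightarrow> v x \<le> M"
  shows "\<not> filterlim v at_top (at_left Rr)"
proof
  assume "filterlim v at_top (at_left Rr)"
  then have "eventually (\<lambda>x. M < v x) (at_left Rr)" using filterlim_at_top_dense by blast
  then obtain b where b: "b < Rr" "\<And>y. b < y \<Longrightarrow> y < Rr \<Longrightarrow> M < v y"
    unfolding eventually_at_left_field by blast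
  define y where "y = (max b 0 + Rr) / 2"
  have Rr: "0 < Rr" using Rr_pos[OF R] .
  have y: "b < y" "y < Rr" "0 < y" unfolding y_def using b Rr by (auto simp: max_def)
  then have "y \<in> I" using memI_fin[OF R] by auto
  then show False using b(2)[OF y(1,2)] bd by fastforce
qed

end

locale ext_ctx =
  fixes p :: real and n :: nat and f g :: "real \<Rightarrow> real" and Rr b L :: real
  assumes p: "1 < p" and Rr: "0 < Rr" and b: "0 < b" and L: "0 < L"
    and fc: "continuous_on {0..} f" and gc: "continuous_on {0..} g"
    and fm: "\<And>x y. 0 \<le> x \<Longrightarrow> x \<le> y \<Longrightarrow> f x \<le> f y"
    and gm: "\<And>x y. 0 \<le> x \<Longrightarrow> x \<le> y \<Longrightarrow> g x \<le> g y"
    and fnn: "\<And>x. 0 \<le> x \<Longrightarrow> 0 \<le> f x"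
    and gnn: "\<And>x. 0 \<le> x \<Longrightarrow> 0 \<le> g x"
begin

definition ph where "ph s y = (y / s^(n-1)) powr (1/(p-1))"
definition A0 where "A0 = ph Rr (L+1)"
definition M2 where "M2 = (Rr+1)^(n-1) * (f (b+1) + g A0)"
definition dl where "dl = min 1 (1 / (A0 + M2 + 1))"
abbreviation "J \<equiv> {Rr..Rr+dl}"
definition G1 where "G1 Y s = ph s (Y s)"
definition G2 where "G2 V Y s = s^(n-1) * (f (V s) + g (ph s (Y s)))"
definition Tm where "Tm VY = (\<lambda>r. b + integral {Rr..r} (G1 (snd VY)),
                              \<lambda>r. L + integral {Rr..r} (G2 (fst VY) (snd VY)))"
definition good where "good VY \<longleftrightarrow> continuous_on J (fst VY) \<and> continuous_on J (snd VY) \<and>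
   (\<forall>r\<in>J. b \<le> fst VY r \<and> fst VY r \<le> b+1 \<and> L \<le> snd VY r \<and> snd VY r \<le> L+1)"
definition le2 where "le2 VY VY' \<longleftrightarrow> (\<forall>r\<in>J. fst VY r \<le> fst VY' r \<and> snd VY r \<le> snd VY' r)"

lemma ph_nonneg: "0 \<le> ph s y" by (simp add: ph_def)

lemma ph_mono: assumes "0 < s" "0 \<le> y" "y \<le> y'" shows "ph s y \<le> ph s y'"
  unfolding ph_def using assms p by (intro powr_mono2 divide_right_mono) auto

lemma ph_le_A0: assumes "Rr \<le> s" "0 \<le> y" "y \<le> L+1" shows "ph s y \<le> A0"
proof -
  have "y / s^(n-1) \<le> (L+1) / Rr^(n-1)"
    using assms Rr L by (intro frac_le power_mono) auto
  then show ?thesis unfolding A0_def ph_def using assms Rr p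
    by (intro powr_mono2) auto
qed

lemma A0_nonneg: "0 \<le> A0" by (simp add: A0_def ph_nonneg)
lemma M2_nonneg: "0 \<le> M2" unfolding M2_def using fnn gnn A0_nonneg b Rr by simp

lemma dl: "0 < dl" "dl \<le> 1" "dl * A0 \<le> 1" "dl * M2 \<le> 1"
proof -
  have pos: "0 < A0 + M2 + 1" using A0_nonneg M2_nonneg by simp
  show "0 < dl" "dl \<le> 1" unfolding dl_def using pos by auto
  have "dl \<le> 1 / (A0 + M2 + 1)" unfolding dl_def by simp
  then have "dl * A0 \<le> 1 / (A0 + M2 + 1) * A0" "dl * M2 \<le> 1 / (A0 + M2 + 1) * M2"
    using A0_nonneg M2_nonneg by (simp_all only: mult_right_mono)
  moreover have "1 / (A0 + M2 + 1) * A0 \<le> 1" "1 / (A0 + M2 + 1) * M2 \<le> 1"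
    using pos A0_nonneg M2_nonneg by (auto simp: field_simps)
  ultimately show "dl * A0 \<le> 1" "dl * M2 \<le> 1" by linarith+
qed

lemma J_pos: "s \<in> J \<Longrightarrow> 0 < s" using Rr by auto

lemma G1_cont: assumes "continuous_on J Y" "\<And>r. r \<in> J \<Longrightarrow> L \<le> Y r"
  shows "continuous_on J (G1 Y)"
proof -
  have ne: "Y s / s^(n-1) \<noteq> 0" if "s \<in> J" for s using assms(2)[OF that] L J_pos[OF that] by simp
  show ?thesis unfolding G1_def[abs_def] ph_def
    using ne J_pos by (intro continuous_intros assms(1)) auto
qed

lemma G2_cont: assumes "good VY" shows "continuous_on J (G2 (fst VY) (snd VY))"
proof -
  have c1: "continuous_on J (\<lambda>s. f (fst VY s))"
    using assms b unfolding good_def by (intro continuous_on_compose2[OF fc]) auto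
  have c2: "continuous_on J (G1 (snd VY))" using assms unfolding good_def by (intro G1_cont) auto
  have c3: "continuous_on J (\<lambda>s. g (G1 (snd VY) s))"
    using ph_nonneg by (intro continuous_on_compose2[OF gc c2]) (auto simp: G1_def)
  show ?thesis unfolding G2_def[abs_def] using c1 c3 unfolding G1_def by (intro continuous_intros)
qed

lemma G1_bounds: assumes "good VY" "s \<in> J" shows "0 \<le> G1 (snd VY) s" "G1 (snd VY) s \<le> A0"
proof -
  have "L \<le> snd VY s" "snd VY s \<le> L+1" using assms unfolding good_def by auto
  then show "0 \<le> G1 (snd VY) s" "G1 (snd VY) s \<le> A0"
    using assms(2) L ph_nonneg ph_le_A0 unfolding G1_def by auto
qed

lemma G2_bounds: assumes "good VY" "s \<in> J" shows "0 \<le> G2 (fst VY) (snd VY) s" "G2 (fst VY) (snd VY) s \<le> M2"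
proof -
  have V: "b \<le> fst VY s" "fst VY s \<le> b+1" "L \<le> snd VY s" "snd VY s \<le> L+1" using assms unfolding good_def by auto
  have s: "0 < s" "s \<le> Rr + 1" using assms(2) dl Rr by auto
  have f1: "0 \<le> f (fst VY s)" "f (fst VY s) \<le> f (b+1)" using fnn fm V b by auto
  have ph1: "0 \<le> ph s (snd VY s)" "ph s (snd VY s) \<le> A0" using ph_nonneg ph_le_A0 V L assms(2) by auto
  have g1: "0 \<le> g (ph s (snd VY s))" "g (ph s (snd VY s)) \<le> g A0" using gnn gm ph1 by auto
  show "0 \<le> G2 (fst VY) (snd VY) s" unfolding G2_def using s f1 g1 by simp
  have "s^(n-1) \<le> (Rr+1)^(n-1)" using s by (intro power_mono) auto
  then show "G2 (fst VY) (snd VY) s \<le> M2" unfolding G2_def M2_def using f1 g1 s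
    by (intro mult_mono add_mono) auto
qed

lemma int_bounds:
  assumes "continuous_on J G" "\<And>s. s \<in> J \<Longrightarrow> 0 \<le> G s" "\<And>s. s \<in> J \<Longrightarrow> G s \<le> M" "dl * M \<le> 1" "r \<in> J"
  shows "0 \<le> integral {Rr..r} G" "integral {Rr..r} G \<le> 1"
proof -
  have sub: "{Rr..r} \<subseteq> J" using assms(5) by auto
  have ci: "continuous_on {Rr..r} G" using continuous_on_subset[OF assms(1) sub] .
  show "0 \<le> integral {Rr..r} G" using assms(2) sub by (intro integral_nonneg integrable_continuous_real ci) auto
  have M0: "0 \<le> M" using assms(2,3)[of Rr] dl by auto
  have "integral {Rr..r} G \<le> integral {Rr..r} (\<lambda>_. M)"
    using assms(3) sub by (intro integral_le integrable_continuous_real ci) auto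
  also have "\<dots> = (r - Rr) * M" using assms(5) by simp
  also have "\<dots> \<le> dl * M" using assms(5) M0 by (intro mult_right_mono) auto
  finally show "integral {Rr..r} G \<le> 1" using assms(4) by simp
qed

lemma T_good: assumes "good VY" shows "good (Tm VY)"
proof -
  have c1: "continuous_on J (G1 (snd VY))" using assms unfolding good_def by (intro G1_cont) auto
  have c2: "continuous_on J (G2 (fst VY) (snd VY))" using G2_cont[OF assms] .
  have b1: "0 \<le> integral {Rr..r} (G1 (snd VY))" "integral {Rr..r} (G1 (snd VY)) \<le> 1" if "r \<in> J" for r
    using int_bounds[OF c1 _ _ dl(3) that] G1_bounds[OF assms] by auto
  have b2: "0 \<le> integral {Rr..r} (G2 (fst VY) (snd VY))" "integral {Rr..r} (G2 (fst VY) (snd VY)) \<le> 1" if "r \<in> J" for r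
    using int_bounds[OF c2 _ _ dl(4) that] G2_bounds[OF assms] by auto
  have i1: "continuous_on J (\<lambda>r. integral {Rr..r} (G1 (snd VY)))"
    by (rule indefinite_integral_continuous_1[OF integrable_continuous_real[OF c1]])
  have i2: "continuous_on J (\<lambda>r. integral {Rr..r} (G2 (fst VY) (snd VY)))"
    by (rule indefinite_integral_continuous_1[OF integrable_continuous_real[OF c2]])
  show ?thesis unfolding good_def Tm_def using b1 b2
    by (auto intro!: continuous_intros i1 i2)
qed

lemma T_mono: assumes "good VY" "good VY'" "le2 VY VY'" shows "le2 (Tm VY) (Tm VY')"
proof -
  have c1: "continuous_on J (G1 (snd VY))" "continuous_on J (G1 (snd VY'))"
    using assms unfolding good_def by (auto intro!: G1_cont)
  have c2: "continuous_on J (G2 (fst VY) (snd VY))" "continuous_on J (G2 (fst VY') (snd VY'))"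
    using G2_cont assms by auto
  have m1: "G1 (snd VY) s \<le> G1 (snd VY') s" if "s \<in> J" for s
  proof -
    have "L \<le> snd VY s" "snd VY s \<le> snd VY' s" using assms that unfolding good_def le2_def by auto
    then show ?thesis unfolding G1_def using L J_pos[OF that] by (intro ph_mono) auto
  qed
  have m2: "G2 (fst VY) (snd VY) s \<le> G2 (fst VY') (snd VY') s" if s: "s \<in> J" for s
  proof -
    have "b \<le> fst VY s" "fst VY s \<le> fst VY' s" using assms s unfolding good_def le2_def by auto
    then have "f (fst VY s) \<le> f (fst VY' s)" using b by (intro fm) auto
    moreover have "g (ph s (snd VY s)) \<le> g (ph s (snd VY' s))"
      using m1[OF s] ph_nonneg unfolding G1_def by (intro gm) auto
    ultimately show ?thesis unfolding G2_def using J_pos[OF s] by (intro mult_left_mono) auto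
  qed
  show ?thesis unfolding le2_def Tm_def
  proof (intro ballI conjI)
    fix r assume r: "r \<in> J"
    have sub: "{Rr..r} \<subseteq> J" using r by auto
    show "fst (\<lambda>r. b + integral {Rr..r} (G1 (snd VY)), \<lambda>r. L + integral {Rr..r} (G2 (fst VY) (snd VY))) r
       \<le> fst (\<lambda>r. b + integral {Rr..r} (G1 (snd VY')), \<lambda>r. L + integral {Rr..r} (G2 (fst VY') (snd VY'))) r"
      using m1 sub c1 by (auto intro!: integral_le integrable_continuous_real intro: continuous_on_subset)
    show "snd (\<lambda>r. b + integral {Rr..r} (G1 (snd VY)), \<lambda>r. L + integral {Rr..r} (G2 (fst VY) (snd VY))) r
       \<le> snd (\<lambda>r. b + integral {Rr..r} (G1 (snd VY')), \<lambda>r. L + integral {Rr..r} (G2 (fst VY') (snd VY'))) r"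
      using m2 sub c2 by (auto intro!: integral_le integrable_continuous_real intro: continuous_on_subset)
  qed
qed

definition init where "init = ((\<lambda>_. b), (\<lambda>_. L))"
definition it where "it k = (Tm ^^ k) init"

lemma init_good: "good init" unfolding good_def init_def using b L by auto

lemma it_Suc: "it (Suc k) = Tm (it k)" by (simp add: it_def)

lemma it_good: "good (it k)"
  by (induction k) (auto simp: it_Suc T_good init_good, simp add: it_def init_good)

lemma init_le: "le2 init (Tm init)"
proof -
  have "good (Tm init)" using T_good[OF init_good] .
  then show ?thesis unfolding le2_def good_def by (auto simp: init_def Tm_def)
qed

lemma it_le: "le2 (it k) (it (Suc k))"
proof (induction k)
  case 0 then show ?case using init_le by (simp add: it_def)
next
  case (Suc k) then show ?case using T_mono[OF it_good[of k] it_good[of "Suc k"] Suc.IH] by (simp only: it_Suc)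
qed

end

context ext_ctx begin

definition Vl where "Vl r = (SUP k. fst (it k) r)"
definition Yl where "Yl r = (SUP k. snd (it k) r)"

lemma itb: assumes "r \<in> J"
  shows "b \<le> fst (it k) r" "fst (it k) r \<le> b+1" "L \<le> snd (it k) r" "snd (it k) r \<le> L+1"
  using it_good[of k] assms unfolding good_def by auto

lemma conv: assumes r: "r \<in> J"
  shows "(\<lambda>k. fst (it k) r) \<longlonglongrightarrow> Vl r" "(\<lambda>k. snd (it k) r) \<longlonglongrightarrow> Yl r"
proof -
  have i1: "incseq (\<lambda>k. fst (it k) r)" "incseq (\<lambda>k. snd (it k) r)"
    using it_le r unfolding le2_def by (auto intro!: incseq_SucI)
  have b1: "bdd_above (range (\<lambda>k. fst (it k) r))" "bdd_above (range (\<lambda>k. snd (it k) r))"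
    using itb[OF r] by (auto intro!: bdd_aboveI2)
  show "(\<lambda>k. fst (it k) r) \<longlonglongrightarrow> Vl r" unfolding Vl_def by (rule LIMSEQ_incseq_SUP[OF b1(1) i1(1)])
  show "(\<lambda>k. snd (it k) r) \<longlonglongrightarrow> Yl r" unfolding Yl_def by (rule LIMSEQ_incseq_SUP[OF b1(2) i1(2)])
qed

lemma limb: assumes r: "r \<in> J" shows "b \<le> Vl r" "Vl r \<le> b+1" "L \<le> Yl r" "Yl r \<le> L+1"
proof -
  note c = conv[OF r]
  show "b \<le> Vl r" by (rule tendsto_lowerbound[OF c(1)]) (use itb[OF r] in auto)
  show "Vl r \<le> b+1" by (rule tendsto_upperbound[OF c(1)]) (use itb[OF r] in auto)
  show "L \<le> Yl r" by (rule tendsto_lowerbound[OF c(2)]) (use itb[OF r] in auto)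
  show "Yl r \<le> L+1" by (rule tendsto_upperbound[OF c(2)]) (use itb[OF r] in auto)
qed

lemma G1_conv: assumes s: "s \<in> J" shows "(\<lambda>k. G1 (snd (it k)) s) \<longlonglongrightarrow> G1 Yl s"
proof -
  have "Yl s / s^(n-1) \<noteq> 0" using limb[OF s] L J_pos[OF s] by simp
  then show ?thesis unfolding G1_def ph_def
    by (intro tendsto_powr tendsto_divide conv[OF s] tendsto_const) (use J_pos[OF s] in auto)
qed

lemma G2_conv: assumes s: "s \<in> J" shows "(\<lambda>k. G2 (fst (it k)) (snd (it k)) s) \<longlonglongrightarrow> G2 Vl Yl s"
proof -
  have nn: "0 \<le> fst (it k) s" for k using itb(1)[OF s, of k] b by linarith
  have f1: "(\<lambda>k. f (fst (it k) s)) \<longlonglongrightarrow> f (Vl s)"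
    by (rule continuous_on_tendsto_compose[OF fc conv(1)[OF s]])
       (use limb[OF s] b nn in \<open>auto intro!: always_eventually\<close>)
  have g1: "(\<lambda>k. g (G1 (snd (it k)) s)) \<longlonglongrightarrow> g (G1 Yl s)"
    by (rule continuous_on_tendsto_compose[OF gc G1_conv[OF s]]) (auto simp: G1_def ph_nonneg)
  show ?thesis unfolding G2_def using f1 g1 unfolding G1_def by (intro tendsto_intros)
qed

lemma fix1: assumes r: "r \<in> J"
  shows "G1 Yl integrable_on {Rr..r}" "Vl r = b + integral {Rr..r} (G1 Yl)"
proof -
  have sub: "{Rr..r} \<subseteq> J" using r by auto
  have c1: "continuous_on J (G1 (snd (it k)))" for k
    using it_good[of k] unfolding good_def by (intro G1_cont) auto
  have mc: "G1 Yl integrable_on {Rr..r} \<and>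
      (\<lambda>k. integral {Rr..r} (G1 (snd (it k)))) \<longlonglongrightarrow> integral {Rr..r} (G1 Yl)"
  proof (rule monotone_convergence_increasing)
    show "G1 (snd (it k)) integrable_on {Rr..r}" for k
      by (rule integrable_continuous_real[OF continuous_on_subset[OF c1 sub]])
    show "G1 (snd (it k)) x \<le> G1 (snd (it (Suc k))) x" if "x \<in> {Rr..r}" for k x
    proof -
      have xJ: "x \<in> J" using that sub by auto
      have "L \<le> snd (it k) x" "snd (it k) x \<le> snd (it (Suc k)) x" using itb[OF xJ] it_le[of k] xJ
        unfolding le2_def by auto
      then show ?thesis unfolding G1_def using L J_pos[OF xJ] by (intro ph_mono) auto
    qed
    show "(\<lambda>k. G1 (snd (it k)) x) \<longlonglongrightarrow> G1 Yl x" if "x \<in> {Rr..r}" for x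
      using G1_conv that sub by auto
    have "\<bar>integral {Rr..r} (G1 (snd (it k)))\<bar> \<le> 1" for k
      using int_bounds[OF c1 _ _ dl(3) r] G1_bounds[OF it_good] by fastforce
    then show "bounded (range (\<lambda>k. integral {Rr..r} (G1 (snd (it k)))))"
      unfolding bounded_iff by auto
  qed
  then show "G1 Yl integrable_on {Rr..r}" by blast
  have "(\<lambda>k. fst (it (Suc k)) r) \<longlonglongrightarrow> b + integral {Rr..r} (G1 Yl)"
    using mc by (simp add: it_Suc Tm_def tendsto_add)
  moreover have "(\<lambda>k. fst (it (Suc k)) r) \<longlonglongrightarrow> Vl r" using LIMSEQ_Suc[OF conv(1)[OF r]] .
  ultimately show "Vl r = b + integral {Rr..r} (G1 Yl)" using LIMSEQ_unique by blast
qed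

lemma fix2: assumes r: "r \<in> J"
  shows "G2 Vl Yl integrable_on {Rr..r}" "Yl r = L + integral {Rr..r} (G2 Vl Yl)"
proof -
  have sub: "{Rr..r} \<subseteq> J" using r by auto
  have c2: "continuous_on J (G2 (fst (it k)) (snd (it k)))" for k
    using G2_cont[OF it_good] .
  have mc: "G2 Vl Yl integrable_on {Rr..r} \<and>
      (\<lambda>k. integral {Rr..r} (G2 (fst (it k)) (snd (it k)))) \<longlonglongrightarrow> integral {Rr..r} (G2 Vl Yl)"
  proof (rule monotone_convergence_increasing)
    show "G2 (fst (it k)) (snd (it k)) integrable_on {Rr..r}" for k
      by (rule integrable_continuous_real[OF continuous_on_subset[OF c2 sub]])
    show "G2 (fst (it k)) (snd (it k)) x \<le> G2 (fst (it (Suc k))) (snd (it (Suc k))) x" if "x \<in> {Rr..r}" for k x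
    proof -
      have xJ: "x \<in> J" using that sub by auto
      have a: "L \<le> snd (it k) x" "snd (it k) x \<le> snd (it (Suc k)) x"
        "b \<le> fst (it k) x" "fst (it k) x \<le> fst (it (Suc k)) x" using itb[OF xJ] it_le[of k] xJ
        unfolding le2_def by auto
      have "ph x (snd (it k) x) \<le> ph x (snd (it (Suc k)) x)" using a L J_pos[OF xJ] by (intro ph_mono) auto
      then have "g (ph x (snd (it k) x)) \<le> g (ph x (snd (it (Suc k)) x))" using ph_nonneg by (intro gm) auto
      moreover have "f (fst (it k) x) \<le> f (fst (it (Suc k)) x)" using a b by (intro fm) auto
      ultimately show ?thesis unfolding G2_def using J_pos[OF xJ] by (intro mult_left_mono) auto
    qed
    show "(\<lambda>k. G2 (fst (it k)) (snd (it k)) x) \<longlonglongrightarrow> G2 Vl Yl x" if "x \<in> {Rr..r}" for x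
      using G2_conv that sub by auto
    have "\<bar>integral {Rr..r} (G2 (fst (it k)) (snd (it k)))\<bar> \<le> 1" for k
      using int_bounds[OF c2 _ _ dl(4) r] G2_bounds[OF it_good] by fastforce
    then show "bounded (range (\<lambda>k. integral {Rr..r} (G2 (fst (it k)) (snd (it k)))))"
      unfolding bounded_iff by auto
  qed
  then show "G2 Vl Yl integrable_on {Rr..r}" by blast
  have "(\<lambda>k. snd (it (Suc k)) r) \<longlonglongrightarrow> L + integral {Rr..r} (G2 Vl Yl)"
    using mc by (simp add: it_Suc Tm_def tendsto_add)
  moreover have "(\<lambda>k. snd (it (Suc k)) r) \<longlonglongrightarrow> Yl r" using LIMSEQ_Suc[OF conv(2)[OF r]] .
  ultimately show "Yl r = L + integral {Rr..r} (G2 Vl Yl)" using LIMSEQ_unique by blast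
qed

lemma lim_good: "good (Vl, Yl)"
proof -
  have e: "Rr + dl \<in> J" using dl by auto
  have cV: "continuous_on J Vl"
  proof -
    have "continuous_on J (\<lambda>r. b + integral {Rr..r} (G1 Yl))"
      by (intro continuous_intros indefinite_integral_continuous_1 fix1(1)[OF e])
    then show ?thesis by (rule continuous_on_cong[THEN iffD1, rotated 2]) (use fix1(2) in auto)
  qed
  have cY: "continuous_on J Yl"
  proof -
    have "continuous_on J (\<lambda>r. L + integral {Rr..r} (G2 Vl Yl))"
      by (intro continuous_intros indefinite_integral_continuous_1 fix2(1)[OF e])
    then show ?thesis by (rule continuous_on_cong[THEN iffD1, rotated 2]) (use fix2(2) in auto)
  qed
  show ?thesis unfolding good_def using cV cY limb by auto
qed

lemma exists_sol: "\<exists>V Y. good (V, Y) \<and> (\<forall>r\<in>J. V r = b + integral {Rr..r} (G1 Y) \<and>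
    Y r = L + integral {Rr..r} (G2 V Y))"
  using lim_good fix1 fix2 by blast

end

context ctx begin

lemma v'_lim_of_unbdd: assumes R: "R = ereal Rr" and ub: "\<And>M. \<exists>x\<in>I. M < v' x"
  shows "filterlim v' at_top (at_left Rr)"
  unfolding filterlim_at_top
proof
  fix M
  obtain x where x: "x \<in> I" "M < v' x" using ub by blast
  have "x < Rr" using x memI_fin[OF R] by auto
  moreover have "\<forall>y>x. y < Rr \<longrightarrow> M \<le> v' y"
  proof (intro allI impI)
    fix y assume "x < y" "y < Rr"
    then have "y \<in> I" using x memI_fin[OF R] by auto
    then show "M \<le> v' y" using v'_mono[of y x] x \<open>x < y\<close> by (auto simp: memI)
  qed
  ultimately show "eventually (\<lambda>y. M \<le> v' y) (at_left Rr)"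
    unfolding eventually_at_left_field by blast
qed

lemma v'_Sup_lim: assumes R: "R = ereal Rr" and bd: "\<And>x. x \<in> I \<Longrightarrow> v' x \<le> A"
  shows "(v' \<longlongrightarrow> (SUP x\<in>I. v' x)) (at_left Rr)" "0 < (SUP x\<in>I. v' x)"
proof -
  let ?a = "SUP x\<in>I. v' x"
  have bdd: "bdd_above (v' ` I)" unfolding bdd_above_def using bd by auto
  have ne: "I \<noteq> {}" using zero_I by auto
  have le: "v' x \<le> ?a" if "x \<in> I" for x using cSUP_upper[OF that bdd] .
  have Rr: "0 < Rr" using Rr_pos[OF R] .
  have hI: "Rr/2 \<in> I" "0 < Rr/2" using Rr memI_fin[OF R] by auto
  show "0 < ?a" using v'_pos[OF hI] le[OF hI(1)] by simp
  show "(v' \<longlongrightarrow> ?a) (at_left Rr)"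
  proof (rule tendstoI)
    fix e :: real assume e: "0 < e"
    obtain x where x: "x \<in> I" "?a - e < v' x" using less_cSUP_iff[OF ne bdd, of "?a - e"] e by auto
    have "x < Rr" using x memI_fin[OF R] by auto
    moreover have "\<forall>y>x. y < Rr \<longrightarrow> dist (v' y) ?a < e"
    proof (intro allI impI)
      fix y assume y: "x < y" "y < Rr"
      have yI: "y \<in> I" using y x memI_fin[OF R] by auto
      have "v' x \<le> v' y" using v'_mono[OF yI, of x] x y by (auto simp: memI)
      then show "dist (v' y) ?a < e" using le[OF yI] x by (auto simp: dist_real_def)
    qed
    ultimately show "eventually (\<lambda>y. dist (v' y) ?a < e) (at_left Rr)"
      unfolding eventually_at_left_field by blast
  qed
qed

lemma I_eq: "R = ereal Rr \<Longrightarrow> I = {0..<Rr}" by (auto simp: ivl0_def)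

lemma ev_left: "0 < (Rr::real) \<Longrightarrow> eventually (\<lambda>y. y < Rr) (at_left Rr)"
  unfolding eventually_at_left_field by (intro exI[of _ "Rr - 1"]) auto

lemma ve_cont: assumes R: "R = ereal Rr" and lim: "(v' \<longlongrightarrow> a) (at_left Rr)"
  shows "continuous_on {0..Rr} (\<lambda>x. if x < Rr then v' x else a)"
  unfolding continuous_on_eq_continuous_within
proof
  fix x assume x: "x \<in> {0..Rr}"
  have Rr: "0 < Rr" using Rr_pos[OF R] .
  let ?F = "\<lambda>x. if x < Rr then v' x else a"
  show "continuous (at x within {0..Rr}) ?F"
  proof (cases "x < Rr")
    case True
    then have xI: "x \<in> I" using x memI_fin[OF R] by auto
    have Ieq: "I = {0..<Rr}" using I_eq[OF R] .
    have e: "at x within {0..Rr} = at x within I"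
      by (rule at_within_nhd[of _ "{..<Rr}"]) (use True x in \<open>auto simp: Ieq\<close>)
    have c: "continuous (at x within I) v'" using v'_cont xI continuous_on_eq_continuous_within by blast
    have "eventually (\<lambda>y. ?F y = v' y) (at x within I)"
      unfolding eventually_at_filter by (intro always_eventually) (auto simp: Ieq)
    then have "(?F \<longlongrightarrow> v' x) (at x within I) \<longleftrightarrow> (v' \<longlongrightarrow> v' x) (at x within I)"
      by (rule tendsto_cong)
    then have "(?F \<longlongrightarrow> v' x) (at x within I)" using c unfolding continuous_within by simp
    then show ?thesis unfolding continuous_within e using True by simp
  next
    case False
    then have xr: "x = Rr" using x by auto
    have "eventually (\<lambda>y. ?F y = v' y) (at_left Rr)"
      by (rule eventually_mono[OF ev_left[OF Rr]]) simp
    then have "(?F \<longlongrightarrow> a) (at_left Rr) \<longleftrightarrow> (v' \<longlongrightarrow> a) (at_left Rr)" by (rule tendsto_cong)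
    then have "(?F \<longlongrightarrow> a) (at_left Rr)" using lim by simp
    then show ?thesis unfolding continuous_within xr at_within_Icc_at_left[OF Rr] by simp
  qed
qed

lemma v_int: assumes "x \<in> I" shows "v x = v0 + integral {0..x} v'"
proof -
  have "(v' has_integral (v x - v 0)) {0..x}"
  proof (rule fundamental_theorem_of_calculus)
    show "0 \<le> x" using assms by (simp add: memI)
    fix y assume "y \<in> {0..x}"
    then have "y \<in> I" using memI_le[OF assms] by auto
    then have "(v has_real_derivative v' y) (at y within {0..x})"
      using vder has_field_derivative_subset interval_I[OF assms] by blast
    then show "(v has_vector_derivative v' y) (at y within {0..x})"
      using has_real_derivative_iff_has_vector_derivative by blast
  qed
  then show ?thesis using v_0 by (simp add: integral_unique)
qed

lemma Phi_int: assumes "x \<in> I" shows "Phi x = integral {0..x} (\<lambda>s. s^(n-1) * h s)"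
proof -
  have "((\<lambda>s. s^(n-1) * h s) has_integral (Phi x - Phi 0)) {0..x}"
  proof (rule fundamental_theorem_of_calculus_interior)
    show "0 \<le> x" using assms by (simp add: memI)
    show "continuous_on {0..x} Phi" using continuous_on_subset[OF Phi_cont interval_I[OF assms]] by simp
    fix y assume "y \<in> {0<..<x}"
    then have "y \<in> I" "0 < y" using memI_le[OF assms] by auto
    then show "(Phi has_vector_derivative y^(n-1) * h y) (at y)"
      using Phi_der has_real_derivative_iff_has_vector_derivative by blast
  qed
  then show ?thesis using Phi_0 by (simp add: integral_unique)
qed

end

context ctx begin

lemma extend: assumes R: "R = ereal Rr" and bd: "\<And>x. x \<in> I \<Longrightarrow> v' x \<le> A"
  shows "\<exists>R' w w'. R < R' \<and> is_sol p n f g v0 R' w w' \<and> (\<forall>r\<in>I. w r = v r)"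
proof -
  have Rr: "0 < Rr" using Rr_pos[OF R] .
  have Ieq: "I = {0..<Rr}" using I_eq[OF R] .
  define a where "a = (SUP x\<in>I. v' x)"
  have lim: "(v' \<longlongrightarrow> a) (at_left Rr)" and a0: "0 < a" using v'_Sup_lim[OF R bd] unfolding a_def by auto
  define ve where "ve x = (if x < Rr then v' x else a)" for x
  have ve_c: "continuous_on {0..Rr} ve" unfolding ve_def[abs_def] using ve_cont[OF R lim] .
  have ve_nn: "0 \<le> ve x" if "0 \<le> x" for x using v'_nonneg a0 that unfolding ve_def by (auto simp: Ieq)
  define b where "b = v0 + integral {0..Rr} ve"
  have b0: "0 < b" unfolding b_def using v0 ve_nn
    by (intro add_pos_nonneg integral_nonneg integrable_continuous_real ve_c) auto
  define L where "L = Rr^(n-1) * a powr (p-1)"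
  have L0: "0 < L" unfolding L_def using Rr a0 by simp
  have fnn: "0 \<le> f x" if "0 \<le> x" for x using f_le[OF order_refl that] f0 by simp
  interpret E: ext_ctx p n f g Rr b L
    by unfold_locales (use p Rr b0 L0 f_cont g_cont f_le g_le fnn g_nonneg in auto)
  obtain V Y where good: "E.good (V, Y)" and eqs: "\<And>r. r \<in> E.J \<Longrightarrow>
      V r = b + integral {Rr..r} (E.G1 Y) \<and> Y r = L + integral {Rr..r} (E.G2 V Y)"
    using E.exists_sol by blast
  define dl where "dl = E.dl"
  have dl0: "0 < dl" unfolding dl_def using E.dl by simp
  define K where "K = {0..Rr+dl}"
  have Vc: "continuous_on {Rr..Rr+dl} V" and Yc: "continuous_on {Rr..Rr+dl} Y"
    and Vb: "\<And>r. r \<in> {Rr..Rr+dl} \<Longrightarrow> b \<le> V r" and Yb: "\<And>r. r \<in> {Rr..Rr+dl} \<Longrightarrow> L \<le> Y r"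
    using good unfolding E.good_def dl_def by auto
  have VRr: "V Rr = b" and YRr: "Y Rr = L" using eqs[of Rr] dl0 by (auto simp: dl_def)
  have phRr: "E.ph Rr L = a"
  proof -
    have "L / Rr^(n-1) = a powr (p-1)" unfolding L_def using Rr by simp
    then show ?thesis unfolding E.ph_def using a0 p by (simp add: powr_powr)
  qed
  have ph_pow: "E.ph x y powr (p-1) = y / x^(n-1)" if "0 < x" "0 < y" for x y
    unfolding E.ph_def using that p by (simp add: powr_powr)
  define w' where "w' x = (if x \<le> Rr then ve x else E.ph x (Y x))" for x
  define w where "w x = (if x < Rr then v x else V x)" for x
  have w'_eq_v': "w' x = v' x" if "x < Rr" for x using that unfolding w'_def ve_def by simp
  have w'_Rr: "w' Rr = a" unfolding w'_def ve_def by simp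
  have w'_J: "w' x = E.G1 Y x" if "Rr \<le> x" for x
    using that w'_Rr phRr YRr unfolding w'_def E.G1_def by (cases "x = Rr") auto
  have G1c: "continuous_on {Rr..Rr+dl} (E.G1 Y)" using E.G1_cont Yc Yb unfolding dl_def by blast
  have w'c: "continuous_on K w'"
  proof -
    have "continuous_on K (\<lambda>x. if x \<le> Rr then ve x else E.G1 Y x)"
    proof (rule continuous_on_cases_le)
      have "{x \<in> K. x \<le> Rr} = {0..Rr}" unfolding K_def using dl0 by auto
      then show "continuous_on {x \<in> K. x \<le> Rr} ve" using ve_c by simp
      have "{x \<in> K. Rr \<le> x} = {Rr..Rr+dl}" unfolding K_def using Rr by auto
      then show "continuous_on {x \<in> K. Rr \<le> x} (E.G1 Y)" using G1c by simp
      show "continuous_on K (\<lambda>x. x)" by (rule continuous_on_id)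
      show "ve x = E.G1 Y x" if "x \<in> K" "x = Rr" for x
        using that w'_J[of Rr] w'_Rr unfolding ve_def by simp
    qed
    moreover have "(\<lambda>x. if x \<le> Rr then ve x else E.G1 Y x) = w'"
      unfolding w'_def E.G1_def by auto
    ultimately show ?thesis by metis
  qed
  have w'_nn: "0 \<le> w' x" if "0 \<le> x" for x unfolding w'_def using ve_nn that E.ph_nonneg by auto
  have w'_int: "w' integrable_on {0..x}" if "x \<in> K" for x
    using continuous_on_subset[OF w'c] that unfolding K_def by (intro integrable_continuous_real) auto
  have w_int: "w x = v0 + integral {0..x} w'" if x: "x \<in> K" for x
  proof (cases "x < Rr")
    case True
    have xI: "x \<in> I" using x True unfolding K_def Ieq by auto
    have "integral {0..x} w' = integral {0..x} v'"
      by (rule integral_cong) (use True w'_eq_v' in auto)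
    then show ?thesis using v_int[OF xI] True unfolding w_def by simp
  next
    case False
    have xJ: "x \<in> {Rr..Rr+dl}" using x False unfolding K_def by auto
    have "integral {0..Rr} w' + integral {Rr..x} w' = integral {0..x} w'"
      by (rule Henstock_Kurzweil_Integration.integral_combine) (use False Rr w'_int x in auto)
    moreover have "integral {0..Rr} w' = integral {0..Rr} ve"
      by (rule integral_cong) (auto simp: w'_def)
    moreover have "integral {Rr..x} w' = integral {Rr..x} (E.G1 Y)"
      by (rule integral_cong) (use w'_J in auto)
    ultimately have "integral {0..x} w' = (b - v0) + (V x - b)"
      using eqs[of x] xJ unfolding b_def dl_def by simp
    then show ?thesis using False unfolding w_def by simp
  qed
  have wc: "continuous_on K w"
  proof -
    have "continuous_on K (\<lambda>x. v0 + integral {0..x} w')"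
      unfolding K_def using w'_int[of "Rr+dl"] Rr dl0 unfolding K_def
      by (intro continuous_intros indefinite_integral_continuous_1) auto
    then show ?thesis by (rule continuous_on_cong[THEN iffD1, rotated 2]) (use w_int in auto)
  qed
  have w_pos: "0 < w x" if "x \<in> K" for x
  proof (cases "x < Rr")
    case True then have "x \<in> I" using that unfolding K_def Ieq by auto
    then show ?thesis using v_pos True unfolding w_def by simp
  next
    case False then have "b \<le> V x" using Vb that unfolding K_def by auto
    then show ?thesis using b0 False unfolding w_def by simp
  qed
  define Hw where "Hw x = x^(n-1) * (f (w x) + g (w' x))" for x
  have Hwc: "continuous_on K Hw"
  proof -
    have "continuous_on K (\<lambda>x. f (w x))"
      by (rule continuous_on_compose2[OF f_cont wc]) (use w_pos in \<open>auto simp: less_imp_le\<close>)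
    moreover have "continuous_on K (\<lambda>x. g (w' x))"
    proof (rule continuous_on_compose2[OF g_cont w'c])
      have "0 \<le> w' x" if "x \<in> K" for x using that w'_nn[of x] unfolding K_def by simp
      then show "w' ` K \<subseteq> {0..}" by blast
    qed
    ultimately show ?thesis unfolding Hw_def[abs_def] by (intro continuous_intros)
  qed
  have Hw_int: "Hw integrable_on {0..x}" if "x \<in> K" for x
    using continuous_on_subset[OF Hwc] that unfolding K_def by (intro integrable_continuous_real) auto
  define Psi where "Psi x = x^(n-1) * w' x powr (p-1)" for x
  have Psi_lt: "Psi x = integral {0..x} Hw" if x: "0 \<le> x" "x < Rr" for x
  proof -
    have xI: "x \<in> I" using x Ieq by auto
    have "Psi x = Phi x" unfolding Psi_def Phi_def using w'_eq_v'[OF x(2)] by simp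
    also have "\<dots> = integral {0..x} (\<lambda>s. s^(n-1) * h s)" using Phi_int[OF xI] .
    also have "\<dots> = integral {0..x} Hw"
      by (rule integral_cong) (use x w'_eq_v' in \<open>auto simp: Hw_def h_def w_def\<close>)
    finally show ?thesis .
  qed
  have int_Rr: "integral {0..Rr} Hw = L"
  proof -
    have cK: "continuous_on K (\<lambda>y. integral {0..y} Hw)"
      unfolding K_def using Hw_int[of "Rr+dl"] Rr dl0 unfolding K_def
      by (intro indefinite_integral_continuous_1) auto
    have "continuous_on {0..Rr} (\<lambda>y. integral {0..y} Hw)"
      by (rule continuous_on_subset[OF cK]) (auto simp: K_def dl0 less_imp_le)
    then have "((\<lambda>y. integral {0..y} Hw) \<longlongrightarrow> integral {0..Rr} Hw) (at_left Rr)"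
      using Rr unfolding continuous_on_eq_continuous_within continuous_within
        at_within_Icc_at_left[OF Rr, symmetric] by auto
    moreover have "((\<lambda>y. integral {0..y} Hw) \<longlongrightarrow> L) (at_left Rr)"
    proof -
      have ev: "eventually (\<lambda>y. Phi y = integral {0..y} Hw) (at_left Rr)"
        unfolding eventually_at_left_field
        by (intro exI[of _ 0]) (use Rr Psi_lt in \<open>auto simp: Psi_def Phi_def w'_eq_v'\<close>)
      have "(Phi \<longlongrightarrow> Rr^(n-1) * a powr (p-1)) (at_left Rr)"
        unfolding Phi_def[abs_def] using a0 by (intro tendsto_intros lim) auto
      then show ?thesis using tendsto_cong[OF ev] unfolding L_def by simp
    qed
    ultimately show ?thesis using tendsto_unique[OF trivial_limit_at_left_real] by blast
  qed
  have Psi_int: "Psi x = integral {0..x} Hw" if x: "x \<in> K" for x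
  proof (cases "x < Rr")
    case True then show ?thesis using Psi_lt x unfolding K_def by auto
  next
    case False
    have xJ: "x \<in> {Rr..Rr+dl}" using x False unfolding K_def by auto
    have "integral {0..Rr} Hw + integral {Rr..x} Hw = integral {0..x} Hw"
      by (rule Henstock_Kurzweil_Integration.integral_combine) (use False Rr Hw_int x in auto)
    moreover have "integral {Rr..x} Hw = integral {Rr..x} (E.G2 V Y)"
      by (rule integral_cong) (use w'_J in \<open>auto simp: Hw_def E.G2_def E.G1_def w_def\<close>)
    ultimately have "integral {0..x} Hw = Y x" using eqs[of x] xJ int_Rr unfolding dl_def by simp
    moreover have "Psi x = Y x"
    proof -
      have x0: "0 < x" using False Rr by simp
      have "w' x = E.ph x (Y x)" using w'_J[of x] False unfolding E.G1_def by simp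
      then have "Psi x = x^(n-1) * (Y x / x^(n-1))" unfolding Psi_def
        using ph_pow[OF x0] Yb[OF xJ] L0 by simp
      then show ?thesis using x0 by simp
    qed
    ultimately show ?thesis by simp
  qed
  define R' where "R' = ereal (Rr + dl)"
  have I'eq: "ivl0 R' = {0..<Rr+dl}" unfolding R'_def by (auto simp: ivl0_def)
  have I'K: "ivl0 R' \<subseteq> K" unfolding I'eq K_def by auto
  have sol': "is_sol p n f g v0 R' w w'"
    unfolding is_sol_def
  proof (intro conjI ballI impI)
    show "0 < R'" unfolding R'_def using Rr dl0 by simp
    fix r assume r: "r \<in> ivl0 R'"
    have rK: "r \<in> K" using r I'K by auto
    have "((\<lambda>x. v0 + integral {0..x} w') has_real_derivative w' r) (at r within K)"
      using integral_has_real_derivative[OF w'c[unfolded K_def]] rK unfolding K_def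
      by (auto intro!: derivative_eq_intros)
    then have "((\<lambda>x. v0 + integral {0..x} w') has_real_derivative w' r) (at r within ivl0 R')"
      using has_field_derivative_subset I'K by blast
    then show "(w has_real_derivative w' r) (at r within ivl0 R')"
      by (rule has_field_derivative_transform_within[OF _ zero_less_one r])
         (use w_int I'K in auto)
    show "0 \<le> w' r" using w'_nn r I'eq by auto
    assume r0: "0 < r"
    have "((\<lambda>x. integral {0..x} Hw) has_real_derivative Hw r) (at r within K)"
      using integral_has_real_derivative[OF Hwc[unfolded K_def]] rK unfolding K_def by auto
    moreover have "at r within K = at r" using r0 r I'eq unfolding K_def
      by (intro at_within_interior) auto
    ultimately have d: "((\<lambda>x. integral {0..x} Hw) has_real_derivative Hw r) (at r)" by simp
    have "(Psi has_real_derivative Hw r) (at r)"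
      by (rule has_field_derivative_transform_within_open[OF d, of "{0<..<Rr+dl}"])
         (use r0 r I'eq Psi_int in \<open>auto simp: K_def\<close>)
    then show "((\<lambda>s. s ^ (n - 1) * w' s powr (p - 1)) has_real_derivative
           r ^ (n - 1) * (f (w r) + g (w' r))) (at r)"
      unfolding Psi_def[abs_def] Hw_def by simp
  next
    show "continuous_on (ivl0 R') w'" using continuous_on_subset[OF w'c I'K] .
    show "w 0 = v0" using Rr v_0 unfolding w_def by simp
    show "w' 0 = 0" using Rr v'_0 w'_eq_v' by simp
  qed
  moreover have "R < R'" unfolding R'_def R using dl0 by simp
  moreover have "\<forall>r\<in>I. w r = v r" unfolding w_def Ieq by auto
  ultimately show ?thesis by blast
qed

end

theorem lemma3p2:
  fixes p v0 :: real and n :: nat and f g v v' :: "real \<Rightarrow> real" and R :: ereal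
  assumes p: "1 < p" and n: "n \<ge> 1"
    and f_cont: "continuous_on {0..} f" and f_mono: "strict_mono_on {0..} f" and f0: "f 0 = 0"
    and g_lip: "\<forall>T\<ge>0. \<exists>L. L-lipschitz_on {0..T} g"
    and g_mono: "strict_mono_on {0..} g" and g0: "g 0 = 0"
    and growth: "(\<integral>\<^sup>+ s\<in>{1..}. ennreal (1 / (prim f s) powr (1 / p)) \<partial>lborel) < \<infinity>
               \<or> (\<integral>\<^sup>+ s\<in>{1..}. ennreal (s powr (p - 2) / g s) \<partial>lborel) < \<infinity>"
    and v0: "v0 > 0"
    and sol: "is_max_sol p n f g v0 R v v'"
  shows "0 < R \<and> R < \<infinity> \<and> filterlim v' at_top (at_left (real_of_ereal R))
         \<and> (filterlim v at_top (at_left (real_of_ereal R)) \<longleftrightarrow>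
            (\<integral>\<^sup>+ s\<in>{1..}. ennreal (s powr (p - 1) / g s) \<partial>lborel) = \<infinity>)"
proof -
  have sol': "is_sol p n f g v0 R v v'"
    and maxi: "\<not> (\<exists>R' w w'. R < R' \<and> is_sol p n f g v0 R' w w' \<and> (\<forall>r\<in>ivl0 R. w r = v r))"
    using sol unfolding is_max_sol_def by auto
  interpret ctx p v0 n f g v v' R
    by unfold_locales (use p n f_cont f_mono f0 g_lip g_mono g0 v0 sol' in auto)
  have R0: "0 < R" by (rule R_pos)
  have Rfin: "R \<noteq> \<infinity>"
  proof
    assume "R = \<infinity>"
    then show False using growth R_fin_F R_fin_g by blast
  qed
  obtain Rr where R: "R = ereal Rr" using R0 Rfin by (cases R) auto
  have v'lim: "filterlim v' at_top (at_left Rr)"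
  proof (cases "\<forall>M. \<exists>x\<in>I. M < v' x")
    case True then show ?thesis using v'_lim_of_unbdd[OF R] by blast
  next
    case False
    then obtain A where "\<And>x. x \<in> I \<Longrightarrow> v' x \<le> A" by (auto simp: not_less)
    then show ?thesis using extend[OF R] maxi by blast
  qed
  have equiv: "filterlim v at_top (at_left Rr) \<longleftrightarrow>
            (\<integral>\<^sup>+ s\<in>{1..}. ennreal (s powr (p - 1) / g s) \<partial>lborel) = \<infinity>"
  proof (cases "(\<integral>\<^sup>+ s\<in>{1..}. ennreal (s powr (p - 1) / g s) \<partial>lborel) = \<infinity>")
    case True
    then have "filterlim v at_top (at_left Rr)"
      using v_lim_of_unbdd[OF R] v_unbdd[OF R v'lim] by blast
    then show ?thesis using True by simp
  next
    case False
    then have "(\<integral>\<^sup>+ s\<in>{1..}. ennreal (s powr (p - 1) / g s) \<partial>lborel) < \<infinity>"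
      by (simp add: less_top)
    then obtain M where "\<forall>x\<in>I. v x \<le> M" using v_bdd[OF R v'lim] by blast
    then have "\<not> filterlim v at_top (at_left Rr)" using v_not_lim_of_bdd[OF R] by blast
    then show ?thesis using False by simp
  qed
  show ?thesis using R0 R v'lim equiv by simp
qed

end
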